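(* (1) Let $p$ be an odd prime and $\alpha,\alpha'\in p\mathbb{Z}_p$ nonzero with $\alpha^{-1}-(\alpha')^{-1}\in\mathbb{Z}_p$. Then there exists $u\in\mathbb{Z}_p^\times$ with $\alpha'=\alpha u^2$. (2) Let $p=2$ and let $M$ be one of the matrices $$(2^d),\ (3\cdot 2^d),\ (5\cdot 2^d),\ (7\cdot 2^d),\ \begin{pmatrix}0&2^d\\2^d&0\end{pmatrix},\ \begin{pmatrix}2^{d+1}&2^d\\2^d&2^{d+1}\end{pmatrix}$$ with $d\ge 1$. Let $M'$ be a nonsingular symmetric matrix over $\mathbb{Z}_2$ of the same size as $M$ such that $M^{-1}-(M')^{-1}$ has entries in $\mathbb{Z}_2$. Consider the sets $\mathcal{T}_1=\{(2),(6),(10),(14)\}$, $\mathcal{T}_2=\left\{\begin{pmatrix}0&2\\2&0\end{pmatrix},\begin{pmatrix}4&2\\2&4\end{pmatrix}\right\}$, $\mathcal{T}_3=\{(4),(20)\}$, $\mathcal{T}_4=\{(12),(28)\}$. If $M\in\mathcal{T}_i$ for some $1\le i\le 4$, then $M'$ is congruent to a matrix in $\mathcal{T}_i$; otherwise $M'$ is congruent to $M$.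
   Context: $\mathbb{Z}_p$ denotes the $p$-adic integers. Two symmetric $n\times n$ matrices $A,B$ over $\mathbb{Z}_p$ are congruent if $B=UAU^T$ for some $U\in\mathrm{GL}_n(\mathbb{Z}_p)$. *)

theory Defs
  imports "Jordan_Normal_Form.Determinant" "HOL-Library.Numeral_Type"
begin

section \<open>The p-adic integers Z_p, p = CARD('p), as the inverse limit of Z/p^n Z\<close>

text \<open>A p-adic integer is represented by its sequence of residues: f n is the residue
  modulo p^n (in the range 0..p^n-1), and the residues are compatible,
  f m mod p^n = f n for n \<le> m.\<close>

definition padic_seqs :: "'p itself \<Rightarrow> (nat \<Rightarrow> int) set" where
  "padic_seqs _ = {f. \<forall>n m. n \<le> m \<longrightarrow> f m mod (int CARD('p) ^ n) = f n}"

typedef ('p::card2) padic_int = "padic_seqs TYPE('p)"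
  by (rule exI[of _ "\<lambda>_. 0"]) (simp add: padic_seqs_def)

setup_lifting type_definition_padic_int

lemma padic_mod_mod:
  "n \<le> m \<Longrightarrow> x mod (int c ^ m) mod (int c ^ n) = x mod (int c ^ n)"
  by (simp add: le_imp_power_dvd mod_mod_cancel)

instantiation padic_int :: (card2) comm_ring_1
begin

lift_definition zero_padic_int :: "'a padic_int" is "\<lambda>_. 0"
  by (simp add: padic_seqs_def)

lift_definition one_padic_int :: "'a padic_int" is "\<lambda>n. 1 mod (int CARD('a) ^ n)"
  by (simp add: padic_seqs_def padic_mod_mod)

lift_definition plus_padic_int :: "'a padic_int \<Rightarrow> 'a padic_int \<Rightarrow> 'a padic_int"
  is "\<lambda>f g n. (f n + g n) mod (int CARD('a) ^ n)"
  unfolding padic_seqs_def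
  by (auto simp: padic_mod_mod) (metis mod_add_eq)

lift_definition uminus_padic_int :: "'a padic_int \<Rightarrow> 'a padic_int"
  is "\<lambda>f n. (- f n) mod (int CARD('a) ^ n)"
  unfolding padic_seqs_def
  by (auto simp: padic_mod_mod) (metis mod_minus_eq)

lift_definition minus_padic_int :: "'a padic_int \<Rightarrow> 'a padic_int \<Rightarrow> 'a padic_int"
  is "\<lambda>f g n. (f n - g n) mod (int CARD('a) ^ n)"
  unfolding padic_seqs_def
  by (auto simp: padic_mod_mod) (metis mod_diff_eq)

lift_definition times_padic_int :: "'a padic_int \<Rightarrow> 'a padic_int \<Rightarrow> 'a padic_int"
  is "\<lambda>f g n. (f n * g n) mod (int CARD('a) ^ n)"
  unfolding padic_seqs_def
  by (auto simp: padic_mod_mod) (metis mod_mult_eq)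

instance
proof
  fix a b c :: "'a padic_int"
  show "a * b * c = a * (b * c)"
    by transfer (simp add: mod_mult_left_eq mod_mult_right_eq mult.assoc)
  show "a * b = b * a" by transfer (simp add: mult.commute)
  show "1 * a = a" by transfer (auto simp: padic_seqs_def mod_mult_left_eq)
  show "a + b + c = a + (b + c)"
    by transfer (simp add: mod_add_left_eq mod_add_right_eq add.assoc)
  show "a + b = b + a" by transfer (simp add: add.commute)
  show "0 + a = a" by transfer (auto simp: padic_seqs_def)
  show "- a + a = 0" by transfer (simp add: mod_add_left_eq)
  show "a - b = a + - b" by transfer (simp add: mod_add_right_eq)
  show "(a + b) * c = a * c + b * c"
    by transfer (simp add: mod_mult_left_eq mod_add_eq distrib_right)
  show "(0::'a padic_int) \<noteq> 1"
  proof
    assume "(0::'a padic_int) = 1"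
    hence "(\<lambda>_. 0::int) = (\<lambda>n. 1 mod (int CARD('a) ^ n))"
      by (metis zero_padic_int.rep_eq one_padic_int.rep_eq)
    hence "(0::int) = 1 mod int CARD('a)" by (metis power_one_right)
    moreover have "int CARD('a) \<ge> 2" using two_le_card[where 'a='a] by linarith
    ultimately show False by simp
  qed
qed

end

text \<open>For nonzero a, b in Z_p: a^{-1} - b^{-1} (computed in the fraction field Q_p)
  lies in Z_p.  Since a^{-1} - b^{-1} = (b - a)/(a b), this means a b divides b - a.\<close>
definition inv_diff_integral :: "'a::comm_ring_1 \<Rightarrow> 'a \<Rightarrow> bool" where
  "inv_diff_integral a b \<longleftrightarrow> a * b dvd b - a"

text \<open>For square matrices M, M' of size n over Z_p with nonzero determinants:
  M^{-1} - M'^{-1} has entries in Z_p, where over the fraction field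
  M^{-1} = adj M / det M.  Entry (i,j) equals
  (det M' * adj M (i,j) - det M * adj M' (i,j)) / (det M * det M').\<close>
definition mat_inv_diff_integral :: "'a::comm_ring_1 mat \<Rightarrow> 'a mat \<Rightarrow> bool" where
  "mat_inv_diff_integral M M' \<longleftrightarrow>
     (\<forall>i < dim_row M. \<forall>j < dim_row M.
        det M * det M' dvd det M' * adj_mat M $$ (i,j) - det M * adj_mat M' $$ (i,j))"

definition symmetric_mat :: "'a mat \<Rightarrow> bool" where
  "symmetric_mat A \<longleftrightarrow> square_mat A \<and> A\<^sup>T = A"

definition mat_congruent :: "'a::comm_ring_1 mat \<Rightarrow> 'a mat \<Rightarrow> bool" where
  "mat_congruent A B \<longleftrightarrow> (\<exists>U \<in> carrier_mat (dim_row A) (dim_row A).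
      invertible_mat U \<and> B = U * A * U\<^sup>T)"

definition mat1 :: "'a \<Rightarrow> 'a mat" where
  "mat1 a = mat 1 1 (\<lambda>_. a)"

definition mat2 :: "'a \<Rightarrow> 'a \<Rightarrow> 'a \<Rightarrow> 'a mat" where
  "mat2 a b c = mat 2 2 (\<lambda>(i,j). if i = 0 \<and> j = 0 then a else if i = 1 \<and> j = 1 then c else b)"

definition M_list :: "nat \<Rightarrow> 'a::comm_ring_1 mat set" where
  "M_list d = {mat1 (2 ^ d), mat1 (3 * 2 ^ d), mat1 (5 * 2 ^ d), mat1 (7 * 2 ^ d),
               mat2 0 (2 ^ d) 0, mat2 (2 ^ (d+1)) (2 ^ d) (2 ^ (d+1))}"

definition T_set :: "nat \<Rightarrow> 'a::comm_ring_1 mat set" where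
  "T_set i = (if i = 1 then {mat1 2, mat1 6, mat1 10, mat1 14}
              else if i = 2 then {mat2 0 2 0, mat2 4 2 4}
              else if i = 3 then {mat1 4, mat1 20}
              else if i = 4 then {mat1 12, mat1 28}
              else {})"

end

theory Submission imports Defs "HOL-Number_Theory.Cong" begin

abbreviation R :: "'p::card2 padic_int \<Rightarrow> nat \<Rightarrow> int" where "R \<equiv> Rep_padic_int"
abbreviation PP :: "'p::card2 itself \<Rightarrow> int" where "PP _ \<equiv> int CARD('p)"

lemma PP_ge2: "int CARD('p::card2) \<ge> 2"
  using two_le_card[where 'a='p] by linarith

lemma R_compat: "n \<le> m \<Longrightarrow> R (x::'p::card2 padic_int) m mod (int CARD('p) ^ n) = R x n"
  using Rep_padic_int[of x] unfolding padic_seqs_def by auto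

lemma R_mod: "R (x::'p::card2 padic_int) n mod (int CARD('p) ^ n) = R x n"
  using R_compat[of n n x] by simp

lemma R_range: "0 \<le> R (x::'p::card2 padic_int) n" "R x n < int CARD('p) ^ n"
proof -
  have pos: "int CARD('p) ^ n > 0" using PP_ge2[where 'p='p] by simp
  show "0 \<le> R x n" by (metis R_mod pos pos_mod_sign)
  show "R x n < int CARD('p) ^ n" by (metis R_mod pos pos_mod_bound)
qed

lemma R_0 [simp]: "R (x::'p::card2 padic_int) 0 = 0"
  using R_mod[of x 0] by simp

lemma padic_ext: "(\<And>n. R (x::'p::card2 padic_int) n = R y n) \<Longrightarrow> x = y"
  by (metis Rep_padic_int_inject ext)

lemma R_plus: "R (x + y :: 'p::card2 padic_int) n = (R x n + R y n) mod (int CARD('p) ^ n)"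
  by (simp add: plus_padic_int.rep_eq)
lemma R_minus: "R (x - y :: 'p::card2 padic_int) n = (R x n - R y n) mod (int CARD('p) ^ n)"
  by (simp add: minus_padic_int.rep_eq)
lemma R_uminus: "R (- x :: 'p::card2 padic_int) n = (- R x n) mod (int CARD('p) ^ n)"
  by (simp add: uminus_padic_int.rep_eq)
lemma R_times: "R (x * y :: 'p::card2 padic_int) n = (R x n * R y n) mod (int CARD('p) ^ n)"
  by (simp add: times_padic_int.rep_eq)
lemma R_one: "R (1 :: 'p::card2 padic_int) n = 1 mod (int CARD('p) ^ n)"
  by (simp add: one_padic_int.rep_eq)
lemma R_zero: "R (0 :: 'p::card2 padic_int) n = 0"
  by (simp add: zero_padic_int.rep_eq)

lemma R_of_nat: "R (of_nat k :: 'p::card2 padic_int) n = int k mod (int CARD('p) ^ n)"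
proof (induction k)
  case 0 then show ?case by (simp add: R_zero)
next
  case (Suc k)
  have "R (of_nat (Suc k) :: 'p padic_int) n = R (1 + of_nat k :: 'p padic_int) n" by simp
  also have "\<dots> = (1 mod (int CARD('p) ^ n) + int k mod (int CARD('p) ^ n)) mod (int CARD('p) ^ n)"
    by (simp add: R_plus R_one Suc)
  also have "\<dots> = int (Suc k) mod (int CARD('p) ^ n)" by (simp add: mod_add_eq add.commute)
  finally show ?case .
qed

lemma R_of_int: "R (of_int k :: 'p::card2 padic_int) n = k mod (int CARD('p) ^ n)"
proof (cases "k \<ge> 0")
  case True
  then have "(of_int k :: 'p padic_int) = of_nat (nat k)" by simp
  then show ?thesis using True R_of_nat[of "nat k" n, where 'p='p] by simp
next
  case False
  then have "(of_int k :: 'p padic_int) = - of_nat (nat (-k))" by (metis nat_0_le neg_0_le_iff_le nle_le of_int_minus of_int_of_nat_eq minus_minus)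
  then have "R (of_int k :: 'p padic_int) n = R (- of_nat (nat (-k)) :: 'p padic_int) n" by (simp only:)
  also have "\<dots> = (- (int (nat (-k)) mod (int CARD('p) ^ n))) mod (int CARD('p) ^ n)" by (simp only: R_uminus R_of_nat)
  also have "\<dots> = k mod (int CARD('p) ^ n)" using False by (simp add: mod_minus_eq)
  finally show ?thesis .
qed

lemma R_numeral: "R (numeral k :: 'p::card2 padic_int) n = numeral k mod (int CARD('p) ^ n)"
  using R_of_int[of "numeral k" n] by simp

lemma R_plus_cong: "[R (x + y :: 'p::card2 padic_int) n = R x n + R y n] (mod (int CARD('p) ^ n))"
  by (simp add: R_plus cong_def)
lemma R_minus_cong: "[R (x - y :: 'p::card2 padic_int) n = R x n - R y n] (mod (int CARD('p) ^ n))"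
  by (simp add: R_minus cong_def)
lemma R_times_cong: "[R (x * y :: 'p::card2 padic_int) n = R x n * R y n] (mod (int CARD('p) ^ n))"
  by (simp add: R_times cong_def)
lemma R_of_int_cong: "[R (of_int k :: 'p::card2 padic_int) n = k] (mod (int CARD('p) ^ n))"
  by (simp add: R_of_int cong_def)

lemma R_eq_0_cong: "[R (x::'p::card2 padic_int) n = 0] (mod (int CARD('p) ^ n)) \<Longrightarrow> R x n = 0"
  by (metis R_mod cong_def mod_0)

lemma R_cong_lower: "n \<le> m \<Longrightarrow> [R (x::'p::card2 padic_int) m = R x n] (mod (int CARD('p) ^ n))"
  by (simp add: R_compat cong_def R_mod)

definition mkp :: "(nat \<Rightarrow> int) \<Rightarrow> 'p::card2 padic_int" where
  "mkp g = Abs_padic_int (\<lambda>n. g n mod (int CARD('p) ^ n))"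

lemma seq_cong_le:
  assumes "\<And>n. [g (Suc n) = g n] (mod (q::int) ^ n)" and "n \<le> m"
  shows "[g m = g n] (mod q ^ n)"
  using assms(2)
proof (induction m)
  case 0 then show ?case by simp
next
  case (Suc m)
  show ?case
  proof (cases "n = Suc m")
    case True then show ?thesis by simp
  next
    case False
    then have "n \<le> m" using Suc by simp
    have "[g (Suc m) = g m] (mod q ^ n)"
      using assms(1)[of m] cong_dvd_modulus \<open>n \<le> m\<close> le_imp_power_dvd by blast
    then show ?thesis using Suc.IH[OF \<open>n \<le> m\<close>] using cong_trans by blast
  qed
qed

lemma mkp_rep:
  assumes "\<And>n. [g (Suc n) = g n] (mod (int CARD('p::card2)) ^ n)"
  shows "R (mkp g :: 'p padic_int) n = g n mod (int CARD('p) ^ n)"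
proof -
  have "(\<lambda>n. g n mod (int CARD('p) ^ n)) \<in> padic_seqs TYPE('p)"
    unfolding padic_seqs_def
  proof (intro CollectI allI impI)
    fix n m :: nat assume "n \<le> m"
    have "g m mod int CARD('p) ^ m mod int CARD('p) ^ n = g m mod int CARD('p) ^ n"
      using padic_mod_mod[OF \<open>n \<le> m\<close>] by simp
    also have "\<dots> = g n mod int CARD('p) ^ n"
      using seq_cong_le[OF assms \<open>n \<le> m\<close>] unfolding cong_def .
    finally show "g m mod int CARD('p) ^ m mod int CARD('p) ^ n = g n mod int CARD('p) ^ n" .
  qed
  then show ?thesis unfolding mkp_def by (simp add: Abs_padic_int_inverse)
qed

lemma mkp_cong:
  assumes "\<And>n. [g (Suc n) = g n] (mod (int CARD('p::card2)) ^ n)"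
  shows "[R (mkp g :: 'p padic_int) n = g n] (mod (int CARD('p) ^ n))"
  using mkp_rep[OF assms] by (simp add: cong_def)

lemma seq_choice:
  assumes base: "Q 0 r0"
    and step: "\<And>n r. Q n r \<Longrightarrow> \<exists>r'. [r' = r] (mod (q::int) ^ n) \<and> Q (Suc n) r'"
  shows "\<exists>g. g 0 = r0 \<and> (\<forall>n. Q n (g n) \<and> [g (Suc n) = g n] (mod q ^ n))"
proof -
  define g where "g = rec_nat r0 (\<lambda>n r. SOME r'. [r' = r] (mod q ^ n) \<and> Q (Suc n) r')"
  have g0: "g 0 = r0" and gS: "\<And>n. g (Suc n) = (SOME r'. [r' = g n] (mod q ^ n) \<and> Q (Suc n) r')"
    unfolding g_def by simp_all
  have *: "Q n (g n) \<and> [g (Suc n) = g n] (mod q ^ n) \<and> Q (Suc n) (g (Suc n))" for n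
  proof (induction n)
    case 0
    have "\<exists>r'. [r' = g 0] (mod q ^ 0) \<and> Q (Suc 0) r'" using step[of 0 r0] base g0 by simp
    then have "[g (Suc 0) = g 0] (mod q ^ 0) \<and> Q (Suc 0) (g (Suc 0))" unfolding gS by (rule someI_ex)
    then show ?case using base g0 by simp
  next
    case (Suc n)
    then have "\<exists>r'. [r' = g (Suc n)] (mod q ^ Suc n) \<and> Q (Suc (Suc n)) r'" using step by blast
    then have "[g (Suc (Suc n)) = g (Suc n)] (mod q ^ Suc n) \<and> Q (Suc (Suc n)) (g (Suc (Suc n)))"
      unfolding gS[of "Suc n"] by (rule someI_ex)
    then show ?case using Suc by simp
  qed
  show ?thesis using * g0 by blast
qed

lemma R_cong_eq: "[R (x::'p::card2 padic_int) n = R (y::'p padic_int) n] (mod (int CARD('p) ^ n)) \<Longrightarrow> R x n = R y n"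
  unfolding cong_def using R_mod[of x n] R_mod[of y n] by simp

lemma R_poly_cong:
  "[R (x * w * w + y * w + z :: 'p::card2 padic_int) n = R x n * R w n * R w n + R y n * R w n + R z n] (mod (int CARD('p) ^ n))"
proof -
  let ?q = "int CARD('p) ^ n"
  have 1: "[R (x * w * w) n = R x n * R w n * R w n] (mod ?q)"
    by (meson R_times_cong cong_mult cong_refl cong_trans)
  have 2: "[R (y * w) n = R y n * R w n] (mod ?q)" by (rule R_times_cong)
  have "[R (x * w * w + y * w + z) n = R (x * w * w) n + R (y * w) n + R z n] (mod ?q)"
    by (meson R_plus_cong cong_add cong_refl cong_trans)
  then show ?thesis using 1 2 by (meson cong_add cong_refl cong_trans)
qed

lemma dvd_iff_R: "(of_int (int CARD('p) ^ k) dvd (x::'p::card2 padic_int)) \<longleftrightarrow> R x k = 0"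
proof
  assume "of_int (int CARD('p) ^ k) dvd x"
  then obtain y where y: "x = of_int (int CARD('p) ^ k) * y" by blast
  have "R x k = (int CARD('p) ^ k mod int CARD('p) ^ k * R y k) mod int CARD('p) ^ k"
    unfolding y R_times R_of_int by simp
  then show "R x k = 0" by simp
next
  assume x0: "R x k = 0"
  let ?q = "int CARD('p)"
  have qpos: "?q ^ k > 0" using PP_ge2[where 'p='p] by simp
  have dv: "?q ^ k dvd R x m" if "k \<le> m" for m
    using R_compat[OF that, of x] x0 by (simp add: dvd_eq_mod_eq_0)
  define g where "g n = R x (n + k) div ?q ^ k" for n
  have gx: "R x (n + k) = ?q ^ k * g n" for n
    using dv[of "n + k"] unfolding g_def by simp
  have gc: "[g (Suc n) = g n] (mod ?q ^ n)" for n
  proof -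
    have "R x (Suc n + k) mod (?q ^ (n + k)) = R x (n + k)"
      using R_compat[of "n + k" "Suc n + k" x] by simp
    moreover have "R x (Suc n + k) = ?q ^ k * g (Suc n)" by (rule gx)
    moreover have "?q ^ (n + k) = ?q ^ k * ?q ^ n" by (simp add: power_add mult.commute)
    ultimately have "(?q ^ k * g (Suc n)) mod (?q ^ k * ?q ^ n) = ?q ^ k * g n"
      using gx[of n] by simp
    then have "?q ^ k * (g (Suc n) mod ?q ^ n) = ?q ^ k * g n"
      by (simp add: mod_mult_mult1)
    then have e: "g (Suc n) mod ?q ^ n = g n" using qpos by simp
    then show ?thesis unfolding cong_def by (metis mod_mod_trivial)
  qed
  have "of_int (?q ^ k) * (mkp g :: 'p padic_int) = x"
  proof (rule padic_ext)
    fix n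
    have "[R (of_int (?q ^ k) * (mkp g :: 'p padic_int)) n = ?q ^ k * g n] (mod ?q ^ n)"
      by (meson R_of_int_cong R_times_cong cong_mult cong_trans mkp_cong gc)
    moreover have "[?q ^ k * g n = R x n] (mod ?q ^ n)"
      using gx[of n] R_cong_lower[of n "n + k" x] by simp
    ultimately show "R (of_int (?q ^ k) * (mkp g :: 'p padic_int)) n = R x n"
      by (meson R_cong_eq cong_trans)
  qed
  then show "of_int (?q ^ k) dvd x" by (metis dvd_triv_left)
qed

lemma hensel_int:
  fixes A B C :: "'p::card2 padic_int"
  assumes prime: "prime (int CARD('p))"
    and root: "[R A 1 * r0 * r0 + R B 1 * r0 + R C 1 = 0] (mod (int CARD('p)))"
    and deriv: "\<not> [2 * R A 1 * r0 + R B 1 = 0] (mod (int CARD('p)))"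
  shows "\<exists>w. A * w * w + B * w + C = 0 \<and> R (w - of_int r0) 1 = 0"
proof -
  let ?q = "int CARD('p)"
  define f where "f n r = R A n * r * r + R B n * r + R C n" for n r
  define Q where "Q n r \<longleftrightarrow> [f n r = 0] (mod ?q ^ n) \<and> [r = r0] (mod ?q)" for n r
  have fcong: "[f m r = f n r] (mod ?q ^ n)" if "n \<le> m" for n m r
    unfolding f_def using R_cong_lower[OF that]
    by (meson cong_add cong_mult cong_refl)
  have step: "\<exists>r'. [r' = r] (mod ?q ^ n) \<and> Q (Suc n) r'" if Qn: "Q n r" for n r
  proof (cases "n = 0")
    case True
    have "[f 1 r = f 1 r0] (mod ?q)" using Qn unfolding Q_def f_def
      by (meson cong_add cong_mult cong_refl)
    then have "[f 1 r = 0] (mod ?q)" using root unfolding f_def by (meson cong_trans)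
    then show ?thesis using Qn True unfolding Q_def by auto
  next
    case False
    have "[f (Suc n) r = 0] (mod ?q ^ n)" using fcong[of n "Suc n" r] Qn unfolding Q_def
      by (meson cong_trans le_SucI order_refl)
    then obtain qq where qq: "f (Suc n) r = ?q ^ n * qq"
      by (metis cong_0_iff dvd_def)
    define d where "d = 2 * R A (Suc n) * r + R B (Suc n)"
    have cA: "[R A (Suc n) = R A 1] (mod ?q)" using R_cong_lower[of 1 "Suc n" A] by simp
    have cB: "[R B (Suc n) = R B 1] (mod ?q)" using R_cong_lower[of 1 "Suc n" B] by simp
    have cr: "[r = r0] (mod ?q)" using Qn unfolding Q_def by simp
    have "[d = 2 * R A 1 * r0 + R B 1] (mod ?q)"
      unfolding d_def using cA cB cr by (intro cong_add cong_mult cong_refl)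
    then have "\<not> ?q dvd d" using deriv
      by (metis cong_0_iff cong_dvd_iff)
    then have "coprime d ?q" using prime prime_imp_coprime coprime_commute by blast
    then obtain e where e: "[d * e = 1] (mod ?q)" using cong_solve_coprime_int by blast
    define t where "t = - qq * e"
    define r' where "r' = r + ?q ^ n * t"
    have expand: "f (Suc n) r' = ?q ^ n * (qq + t * d) + R A (Suc n) * (?q ^ n * ?q ^ n) * (t * t)"
      unfolding r'_def d_def using qq unfolding f_def by (simp add: algebra_simps)
    have "[qq + t * d = qq - qq * (d * e)] (mod ?q)" unfolding t_def by (simp add: algebra_simps)
    moreover have "[qq - qq * (d * e) = qq - qq * 1] (mod ?q)" using e by (meson cong_diff cong_mult cong_refl)
    ultimately have "[qq + t * d = 0] (mod ?q)" by (simp add: cong_trans)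
    then have d1: "?q ^ Suc n dvd ?q ^ n * (qq + t * d)" by (simp add: cong_0_iff)
    have "Suc n \<le> n + n" using False by simp
    then have d2: "?q ^ Suc n dvd ?q ^ n * ?q ^ n" unfolding power_add[symmetric] by (rule le_imp_power_dvd)
    have "[f (Suc n) r' = 0] (mod ?q ^ Suc n)" unfolding expand cong_0_iff
      using d1 d2 by (simp add: dvd_add dvd_mult dvd_mult2)
    moreover have "[r' = r] (mod ?q ^ n)" unfolding r'_def by (simp add: cong_iff_dvd_diff)
    moreover have "[r' = r] (mod ?q)" using \<open>[r' = r] (mod ?q ^ n)\<close> False
      by (metis cong_dvd_modulus dvd_power gr0I)
    ultimately show ?thesis using Qn unfolding Q_def by (meson cong_trans)
  qed
  have "Q 0 r0" unfolding Q_def by simp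
  from seq_choice[of Q r0 ?q, OF this step] obtain g where
    g: "g 0 = r0" "\<And>n. Q n (g n)" "\<And>n. [g (Suc n) = g n] (mod ?q ^ n)" by blast
  define w where "w = (mkp g :: 'p padic_int)"
  have wc: "[R w n = g n] (mod ?q ^ n)" for n unfolding w_def using mkp_cong g(3) by blast
  have "A * w * w + B * w + C = 0"
  proof (rule padic_ext)
    fix n
    have "[R (A * w * w + B * w + C) n = f n (R w n)] (mod ?q ^ n)" unfolding f_def by (rule R_poly_cong)
    moreover have "[f n (R w n) = f n (g n)] (mod ?q ^ n)" unfolding f_def using wc
      by (meson cong_add cong_mult cong_refl)
    moreover have "[f n (g n) = 0] (mod ?q ^ n)" using g(2) unfolding Q_def by blast
    ultimately have "[R (A * w * w + B * w + C) n = 0] (mod ?q ^ n)" by (meson cong_trans)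
    then show "R (A * w * w + B * w + C) n = R 0 n" using R_eq_0_cong R_zero by metis
  qed
  moreover have "R (w - of_int r0) 1 = 0"
  proof -
    have "[R (w - of_int r0) 1 = R w 1 - R (of_int r0 :: 'p padic_int) 1] (mod ?q ^ 1)" by (rule R_minus_cong)
    moreover have "[R w 1 - R (of_int r0 :: 'p padic_int) 1 = g 1 - r0] (mod ?q ^ 1)"
      using wc[of 1] R_of_int_cong[of r0 1] by (meson cong_diff)
    moreover have "[g 1 - r0 = 0] (mod ?q ^ 1)" using g(2)[of 1] unfolding Q_def
      by (simp add: cong_iff_dvd_diff)
    ultimately show ?thesis by (meson R_eq_0_cong cong_trans)
  qed
  ultimately show ?thesis by blast
qed

abbreviation PPP :: "'p::card2 padic_int" where "PPP \<equiv> of_nat CARD('p)"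

lemma dvd_p_iff: "(of_nat CARD('p) dvd (x::'p::card2 padic_int)) \<longleftrightarrow> R x 1 = 0"
  using dvd_iff_R[of 1 x] by simp

lemma hensel:
  fixes A B C r :: "'p::card2 padic_int"
  assumes prime: "prime CARD('p)"
    and root: "of_nat CARD('p) dvd A * r * r + B * r + C"
    and deriv: "\<not> of_nat CARD('p) dvd 2 * A * r + B"
  shows "\<exists>w. A * w * w + B * w + C = 0 \<and> of_nat CARD('p) dvd w - r"
proof -
  let ?q = "int CARD('p)"
  have pr: "prime ?q" using prime by simp
  have "[R (A * r * r + B * r + C) 1 = R A 1 * R r 1 * R r 1 + R B 1 * R r 1 + R C 1] (mod ?q ^ 1)"
    by (rule R_poly_cong)
  moreover have "R (A * r * r + B * r + C) 1 = 0" using root dvd_p_iff by blast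
  ultimately have rt: "[R A 1 * R r 1 * R r 1 + R B 1 * R r 1 + R C 1 = 0] (mod ?q)"
    by (simp add: cong_sym)
  have c2: "[R (2::'p padic_int) 1 = 2] (mod ?q ^ 1)" using R_numeral[of "num.Bit0 num.One" 1, where 'p='p]
    by (simp add: cong_def)
  have t1: "[R (2 * A * r) 1 = R (2 * A) 1 * R r 1] (mod ?q ^ 1)" by (rule R_times_cong)
  have t2: "[R (2 * A) 1 = R (2::'p padic_int) 1 * R A 1] (mod ?q ^ 1)" by (rule R_times_cong)
  have t3: "[R (2 * A * r + B) 1 = R (2 * A * r) 1 + R B 1] (mod ?q ^ 1)" by (rule R_plus_cong)
  have tt: "[R (2 * A * r + B) 1 = 2 * R A 1 * R r 1 + R B 1] (mod ?q ^ 1)"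
    by (rule cong_trans[OF t3 cong_add[OF cong_trans[OF t1 cong_mult[OF cong_trans[OF t2 cong_mult[OF c2 cong_refl]] cong_refl]] cong_refl]])
  have dv: "\<not> [2 * R A 1 * R r 1 + R B 1 = 0] (mod ?q)"
  proof
    assume "[2 * R A 1 * R r 1 + R B 1 = 0] (mod ?q)"
    then have "[R (2 * A * r + B) 1 = 0] (mod ?q ^ 1)" using tt by (simp add: cong_trans)
    then have "R (2 * A * r + B) 1 = 0" by (rule R_eq_0_cong)
    then show False using deriv dvd_p_iff by blast
  qed
  obtain w where w: "A * w * w + B * w + C = 0" "R (w - of_int (R r 1)) 1 = 0"
    using hensel_int[OF pr rt dv] by blast
  have "[R (w - r) 1 = R w 1 - R r 1] (mod ?q ^ 1)" by (rule R_minus_cong)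
  moreover have "[R (w - of_int (R r 1)) 1 = R w 1 - R r 1] (mod ?q ^ 1)"
    using R_minus_cong[of w "of_int (R r 1)" 1] R_of_int_cong[of "R r 1" 1, where 'p='p]
    by (meson cong_diff cong_refl cong_trans)
  ultimately have "R (w - r) 1 = 0" using w(2)
    by (metis R_eq_0_cong cong_sym cong_trans)
  then show ?thesis using w(1) dvd_p_iff by blast
qed

lemma R1_one: "R (1::'p::card2 padic_int) 1 = 1"
  using PP_ge2[where 'p='p] by (simp add: R_one)

lemma p_not_dvd_1: "\<not> (of_nat CARD('p) dvd (1::'p::card2 padic_int))"
  unfolding dvd_p_iff R1_one by simp

lemma unit_iff:
  assumes prime: "prime CARD('p)"
  shows "(x::'p::card2 padic_int) dvd 1 \<longleftrightarrow> \<not> of_nat CARD('p) dvd x"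
proof
  assume "x dvd 1"
  then show "\<not> of_nat CARD('p) dvd x" using p_not_dvd_1 dvd_trans by blast
next
  assume nd: "\<not> of_nat CARD('p) dvd x"
  let ?q = "int CARD('p)"
  have pr: "prime ?q" using prime by simp
  have "R x 1 \<noteq> 0" using nd dvd_p_iff by blast
  moreover have "0 \<le> R x 1" "R x 1 < ?q" using R_range[of x 1] by auto
  ultimately have "\<not> ?q dvd R x 1" using zdvd_not_zless by fastforce
  then have "coprime (R x 1) ?q" using pr prime_imp_coprime coprime_commute by blast
  then obtain e where e: "[R x 1 * e = 1] (mod ?q)" using cong_solve_coprime_int by blast
  have "[R (x * of_int e - 1) 1 = R x 1 * e - 1] (mod ?q ^ 1)"
    using R_minus_cong[of "x * of_int e" 1 1] R_times_cong[of x "of_int e" 1] R_of_int_cong[of e 1, where 'p='p]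
      R1_one[where 'p='p]
    by (metis (no_types, lifting) cong_diff cong_mult cong_refl cong_trans)
  moreover have "[R x 1 * e - 1 = 0] (mod ?q ^ 1)" using e by (simp add: cong_iff_dvd_diff)
  ultimately have "R (x * of_int e - 1) 1 = 0" by (meson R_eq_0_cong cong_trans)
  then have "of_nat CARD('p) dvd x * of_int e - 1" unfolding dvd_p_iff .
  moreover have "0 * of_int e * of_int e + x * of_int e + - 1 = x * of_int e - (1::'p padic_int)" by simp
  ultimately have root: "of_nat CARD('p) dvd 0 * of_int e * of_int e + x * of_int e + - 1" by simp
  have deriv: "\<not> of_nat CARD('p) dvd 2 * 0 * of_int e + x" using nd by simp
  obtain w where "0 * w * w + x * w + - 1 = 0" using hensel[OF prime root deriv] by blast
  then have "x * w = 1" by (simp add: algebra_simps)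
  then show "x dvd 1" by (metis dvd_triv_left)
qed

lemma R_pow_p: "R ((of_nat CARD('p) :: 'p::card2 padic_int) ^ k) n = int CARD('p) ^ k mod int CARD('p) ^ n"
  using R_of_int[of "int CARD('p) ^ k" n, where 'p='p] by simp

lemma pow_p_nz: "(of_nat CARD('p) :: 'p::card2 padic_int) ^ k \<noteq> 0"
proof
  assume "(of_nat CARD('p) :: 'p::card2 padic_int) ^ k = 0"
  then have "R ((of_nat CARD('p) :: 'p::card2 padic_int) ^ k) (Suc k) = 0" by (simp add: R_zero)
  then have "int CARD('p) ^ k mod int CARD('p) ^ Suc k = 0" by (simp add: R_pow_p)
  moreover have "int CARD('p) ^ k < int CARD('p) ^ Suc k" "0 < int CARD('p) ^ k"
    using PP_ge2[where 'p='p] by auto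
  ultimately show False by simp
qed

lemma val_decomp:
  assumes prime: "prime CARD('p)" and nz: "(x::'p::card2 padic_int) \<noteq> 0"
  shows "\<exists>k u. x = of_nat CARD('p) ^ k * u \<and> u dvd 1"
proof -
  have "\<exists>n. R x n \<noteq> 0"
  proof (rule ccontr)
    assume "\<not> (\<exists>n. R x n \<noteq> 0)"
    then have "x = 0" by (intro padic_ext) (simp add: R_zero)
    then show False using nz by simp
  qed
  then obtain n where n: "R x n \<noteq> 0" by blast
  then have "n \<noteq> 0" by (cases n) auto
  then have ex: "\<exists>m. R x (Suc m) \<noteq> 0" using n by (metis not0_implies_Suc)
  define k where "k = (LEAST m. R x (Suc m) \<noteq> 0)"
  have k1: "R x (Suc k) \<noteq> 0" unfolding k_def using LeastI_ex[OF ex] .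
  have k0: "R x k = 0"
  proof (cases k)
    case 0 then show ?thesis by simp
  next
    case (Suc j)
    then have "j < k" by simp
    then have "\<not> R x (Suc j) \<noteq> 0" unfolding k_def using not_less_Least by blast
    then show ?thesis using Suc by simp
  qed
  obtain u where u: "x = of_int (int CARD('p) ^ k) * u" using k0 dvd_iff_R by blast
  have "\<not> of_nat CARD('p) dvd u"
  proof
    assume "of_nat CARD('p) dvd u"
    then obtain u' where "u = of_nat CARD('p) * u'" by blast
    then have "x = of_int (int CARD('p) ^ Suc k) * u'" using u by simp
    then have "R x (Suc k) = 0" using dvd_iff_R by (metis dvd_triv_left)
    then show False using k1 by simp
  qed
  then have "u dvd 1" using unit_iff[OF prime] by blast
  moreover have "x = of_nat CARD('p) ^ k * u" using u by simp
  ultimately show ?thesis by blast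
qed

lemma no_zero_div:
  assumes prime: "prime CARD('p)" and "(x::'p::card2 padic_int) \<noteq> 0" "y \<noteq> 0"
  shows "x * y \<noteq> 0"
proof
  assume xy: "x * y = 0"
  obtain a u where a: "x = of_nat CARD('p) ^ a * u" "u dvd 1" using val_decomp[OF prime assms(2)] by blast
  obtain b v where b: "y = of_nat CARD('p) ^ b * v" "v dvd 1" using val_decomp[OF prime assms(3)] by blast
  obtain ui where ui: "u * ui = 1" using a(2) by (metis dvdE)
  obtain vi where vi: "v * vi = 1" using b(2) by (metis dvdE)
  have "x * y * (ui * vi) = (of_nat CARD('p) :: 'p padic_int) ^ (a + b) * (u * ui) * (v * vi)"
    using a b by (simp add: power_add algebra_simps)
  then have "(of_nat CARD('p) :: 'p padic_int) ^ (a + b) = x * y * (ui * vi)"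
    using ui vi by simp
  then show False using xy pow_p_nz[of "a + b", where 'p='p] by simp
qed

lemma mult_cancel:
  assumes prime: "prime CARD('p)" and "(a::'p::card2 padic_int) \<noteq> 0" "a * b = a * c"
  shows "b = c"
proof -
  have "a * (b - c) = 0" using assms(3) by (simp add: algebra_simps)
  then show ?thesis using no_zero_div[OF prime assms(2), of "b - c"] by auto
qed

lemma dvd_pow_p: "k \<ge> 1 \<Longrightarrow> (of_nat CARD('p) :: 'p::card2 padic_int) dvd of_nat CARD('p) ^ k"
  by (simp add: dvd_power)

lemma val_compare:
  fixes u v :: "'p::card2 padic_int"
  assumes prime: "prime CARD('p)" and u: "u dvd 1" and v: "v dvd 1" and a: "a \<ge> 1"
    and d: "(of_nat CARD('p) ^ a * u) * (of_nat CARD('p) ^ b * v) dvd (of_nat CARD('p) ^ b * v - of_nat CARD('p) ^ a * u)"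
  shows "a = b \<and> of_nat CARD('p) ^ a dvd (v - u)"
proof -
  let ?P = "of_nat CARD('p) :: 'p padic_int"
  obtain k where k: "?P ^ b * v - ?P ^ a * u = (?P ^ a * u) * (?P ^ b * v) * k" using d by blast
  have nu: "\<not> ?P dvd u" using u unit_iff[OF prime] by blast
  have nv: "\<not> ?P dvd v" using v unit_iff[OF prime] by blast
  consider "a < b" | "b < a" | "a = b" by linarith
  then show ?thesis
  proof cases
    case 1
    have pb: "?P ^ b = ?P ^ a * ?P ^ (b - a)" using 1 by (simp add: power_add[symmetric])
    have e1: "?P ^ a * (?P ^ (b - a) * v - u) = ?P ^ b * v - ?P ^ a * u" by (simp add: pb algebra_simps)
    have e2: "?P ^ b * v - ?P ^ a * u = ?P ^ a * (?P ^ b * u * v * k)" by (simp only: k) (simp add: algebra_simps)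
    have "?P ^ a * (?P ^ (b - a) * v - u) = ?P ^ a * (?P ^ b * u * v * k)" using e1 e2 by simp
    then have "?P ^ (b - a) * v - u = ?P ^ b * u * v * k" using mult_cancel[OF prime pow_p_nz] by blast
    then have "u = ?P ^ (b - a) * v - ?P ^ b * (u * v * k)" by (simp add: algebra_simps)
    moreover have "?P dvd ?P ^ (b - a) * v - ?P ^ b * (u * v * k)"
      using 1 a by (intro dvd_diff dvd_mult2 dvd_pow_p) auto
    ultimately show ?thesis using nu by simp
  next
    case 2
    have pa: "?P ^ a = ?P ^ b * ?P ^ (a - b)" using 2 by (simp add: power_add[symmetric])
    have e1: "?P ^ b * (v - ?P ^ (a - b) * u) = ?P ^ b * v - ?P ^ a * u" by (simp add: pa algebra_simps)
    have e2: "?P ^ b * v - ?P ^ a * u = ?P ^ b * (?P ^ a * u * v * k)" by (simp only: k) (simp add: algebra_simps)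
    have "?P ^ b * (v - ?P ^ (a - b) * u) = ?P ^ b * (?P ^ a * u * v * k)" using e1 e2 by simp
    then have "v - ?P ^ (a - b) * u = ?P ^ a * u * v * k" using mult_cancel[OF prime pow_p_nz] by blast
    then have "v = ?P ^ (a - b) * u + ?P ^ a * (u * v * k)" by (simp add: algebra_simps)
    moreover have "?P dvd ?P ^ (a - b) * u + ?P ^ a * (u * v * k)"
      using 2 a by (intro dvd_add dvd_mult2 dvd_pow_p) auto
    ultimately show ?thesis using nv by simp
  next
    case 3
    have "?P ^ a * (v - u) = ?P ^ b * v - ?P ^ a * u" using 3 by (simp add: algebra_simps)
    also have "\<dots> = ?P ^ a * (?P ^ a * (u * v * k))" unfolding k using 3 by (simp add: algebra_simps)
    finally have "?P ^ a * (v - u) = ?P ^ a * (?P ^ a * (u * v * k))" .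
    then have "v - u = ?P ^ a * (u * v * k)" using mult_cancel[OF prime pow_p_nz] by blast
    then show ?thesis using 3 by simp
  qed
qed

lemma part1:
  fixes \<alpha> \<alpha>' :: "'p::card2 padic_int"
  assumes prime: "prime CARD('p)" and odd: "odd CARD('p)"
    and nz: "\<alpha> \<noteq> 0" "\<alpha>' \<noteq> 0" and dv: "of_nat CARD('p) dvd \<alpha>" "of_nat CARD('p) dvd \<alpha>'"
    and idi: "inv_diff_integral \<alpha> \<alpha>'"
  shows "\<exists>u. u dvd 1 \<and> \<alpha>' = \<alpha> * u ^ 2"
proof -
  let ?P = "of_nat CARD('p) :: 'p padic_int"
  obtain a u where au: "\<alpha> = ?P ^ a * u" "u dvd 1" using val_decomp[OF prime nz(1)] by blast
  obtain b v where bv: "\<alpha>' = ?P ^ b * v" "v dvd 1" using val_decomp[OF prime nz(2)] by blast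
  have a1: "a \<ge> 1"
  proof (rule ccontr)
    assume "\<not> a \<ge> 1"
    then have "a = 0" by simp
    then have "\<alpha> = u" using au by simp
    then show False using dv(1) au(2) unit_iff[OF prime] by blast
  qed
  have "a = b \<and> ?P ^ a dvd (v - u)"
    using val_compare[OF prime au(2) bv(2) a1] idi unfolding inv_diff_integral_def au(1) bv(1) by blast
  then have ab: "a = b" and vu: "?P dvd v - u" using a1 dvd_pow_p dvd_trans by blast+
  obtain ui where ui: "u * ui = 1" using au(2) by (metis dvdE)
  define w where "w = v * ui"
  have "w - 1 = (v - u) * ui" unfolding w_def using ui by (simp add: algebra_simps)
  then have w1: "?P dvd w - 1" using vu by simp
  have "1 * 1 * 1 + 0 * 1 + - w = - (w - (1::'p padic_int))" by simp
  then have root: "?P dvd 1 * 1 * 1 + 0 * 1 + - w" using w1 by (simp only: dvd_minus_iff)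
  have "R (2::'p padic_int) 1 = 2"
  proof -
    have "CARD('p) \<ge> 2" by (rule two_le_card)
    moreover have "CARD('p) \<noteq> 2" using odd by auto
    ultimately have "int CARD('p) > 2" by simp
    then show ?thesis using R_numeral[of "num.Bit0 num.One" 1, where 'p='p] by simp
  qed
  then have deriv: "\<not> ?P dvd 2 * 1 * 1 + 0" unfolding dvd_p_iff by simp
  obtain s where s: "1 * s * s + 0 * s + - w = 0" "?P dvd s - 1" using hensel[OF prime root deriv] by blast
  have su: "s dvd 1"
  proof -
    have "\<not> ?P dvd s"
    proof
      assume "?P dvd s"
      then have "?P dvd s - (s - 1)" using s(2) by (rule dvd_diff)
      then show False using p_not_dvd_1[where 'p='p] by simp
    qed
    then show ?thesis using unit_iff[OF prime] by blast
  qed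
  have "\<alpha> * s ^ 2 = ?P ^ a * (u * ui) * v" using s(1) unfolding au(1) w_def power2_eq_square
    by (simp add: algebra_simps)
  then have "\<alpha>' = \<alpha> * s ^ 2" using ui ab bv(1) by simp
  then show ?thesis using su by blast
qed

lemma det_1x1: assumes "(A::'a::comm_ring_1 mat) \<in> carrier_mat 1 1" shows "det A = A $$ (0,0)"
proof -
  have "det A = (\<Sum>i<1. A $$ (i,0) * cofactor A i 0)" by (rule laplace_expansion_column[OF assms]) simp
  also have "\<dots> = A $$ (0,0) * cofactor A 0 0" by simp
  also have "cofactor A 0 0 = 1"
  proof -
    have "mat_delete A 0 0 \<in> carrier_mat 0 0" using mat_delete_carrier[OF assms] by simp
    then show ?thesis unfolding cofactor_def by simp
  qed
  finally show ?thesis by simp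
qed

lemma det_2x2: assumes "(A::'a::comm_ring_1 mat) \<in> carrier_mat 2 2"
  shows "det A = A $$ (0,0) * A $$ (1,1) - A $$ (0,1) * A $$ (1,0)"
proof -
  have "det A = (\<Sum>i<2. A $$ (i,0) * cofactor A i 0)" by (rule laplace_expansion_column[OF assms]) simp
  also have "\<dots> = A $$ (0,0) * cofactor A 0 0 + A $$ (1,0) * cofactor A 1 0" by (simp add: numeral_2_eq_2)
  also have "cofactor A 0 0 = A $$ (1,1)" unfolding cofactor_def
    using assms by (subst det_1x1) (auto simp: mat_delete_def)
  also have "cofactor A 1 0 = - A $$ (0,1)" unfolding cofactor_def
    using assms by (subst det_1x1) (auto simp: mat_delete_def)
  finally show ?thesis by (simp add: algebra_simps)
qed

lemma mat1_carrier[simp]: "mat1 a \<in> carrier_mat 1 1" and mat1_dims[simp]: "dim_row (mat1 a) = 1" "dim_col (mat1 a) = 1"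
  and mat1_idx[simp]: "mat1 a $$ (0,0) = a"
  unfolding mat1_def by auto

lemma mat2_carrier[simp]: "mat2 a b c \<in> carrier_mat 2 2" and mat2_dims[simp]: "dim_row (mat2 a b c) = 2" "dim_col (mat2 a b c) = 2"
  and mat2_idx[simp]: "mat2 a b c $$ (0,0) = a" "mat2 a b c $$ (0,1) = b" "mat2 a b c $$ (1,0) = b" "mat2 a b c $$ (1,1) = c"
  "mat2 a b c $$ (0,Suc 0) = b" "mat2 a b c $$ (Suc 0,0) = b" "mat2 a b c $$ (Suc 0,Suc 0) = c"
  unfolding mat2_def by auto

lemma mat1_eq: "A \<in> carrier_mat 1 1 \<Longrightarrow> A = mat1 (A $$ (0,0))"
  by (rule eq_matI) (auto simp: mat1_def)

lemma less2_cases: "(i::nat) < 2 \<Longrightarrow> i = 0 \<or> i = 1" by auto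

lemma mat2_eq: assumes "A \<in> carrier_mat 2 2" "A $$ (1,0) = A $$ (0,1)"
  shows "A = mat2 (A $$ (0,0)) (A $$ (0,1)) (A $$ (1,1))"
  by (rule eq_matI) (use assms in \<open>auto simp: mat2_def dest!: less2_cases\<close>)

lemma mat2_eq_iff: "mat2 a b c = mat2 a' b' c' \<longleftrightarrow> a = a' \<and> b = b' \<and> c = c'"
  by (metis mat2_idx)

lemma mat1_eq_iff: "mat1 a = mat1 a' \<longleftrightarrow> a = a'"
  by (metis mat1_idx)

lemma det_mat1[simp]: "det (mat1 (a::'a::comm_ring_1)) = a"
  using det_1x1[OF mat1_carrier[of a]] by simp

lemma det_mat2[simp]: "det (mat2 a b (c::'a::comm_ring_1)) = a * c - b * b"
  by (simp add: det_2x2)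

lemma adj_mat1: "adj_mat (mat1 (a::'a::comm_ring_1)) = mat1 1"
proof -
  have "mat_delete (mat1 a) 0 0 \<in> carrier_mat 0 0" using mat_delete_carrier[OF mat1_carrier[of a]] by simp
  then have "cofactor (mat1 a) 0 0 = 1" unfolding cofactor_def by simp
  then show ?thesis by (intro eq_matI) (auto simp: adj_mat_def)
qed

lemma adj_mat2: "adj_mat (mat2 a b (c::'a::comm_ring_1)) = mat2 c (-b) a"
  by (rule eq_matI) (auto simp: adj_mat_def cofactor_def det_1x1 mat_delete_def dest!: less2_cases)

definition m22 :: "'a \<Rightarrow> 'a \<Rightarrow> 'a \<Rightarrow> 'a \<Rightarrow> 'a mat" where
  "m22 p q r s = mat 2 2 (\<lambda>(i,j). if i = 0 then (if j = 0 then p else q) else (if j = 0 then r else s))"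

lemma m22_carrier[simp]: "m22 p q r s \<in> carrier_mat 2 2" and m22_dims[simp]: "dim_row (m22 p q r s) = 2" "dim_col (m22 p q r s) = 2"
  and m22_idx[simp]: "m22 p q r s $$ (0,0) = p" "m22 p q r s $$ (0,1) = q" "m22 p q r s $$ (1,0) = r" "m22 p q r s $$ (1,1) = s"
  "m22 p q r s $$ (0,Suc 0) = q" "m22 p q r s $$ (Suc 0,0) = r" "m22 p q r s $$ (Suc 0,Suc 0) = s"
  unfolding m22_def by auto

lemma m22_mult: "m22 p q r s * m22 p' q' r' s' = m22 (p*p' + q*r') (p*q' + q*s') (r*p' + s*r') (r*q' + s*s')"
  by (rule eq_matI) (auto simp: m22_def scalar_prod_def numeral_2_eq_2 dest!: less2_cases)

lemma m22_transpose: "(m22 p q r s)\<^sup>T = m22 p r q s"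
  by (rule eq_matI) (auto simp: m22_def dest!: less2_cases)

lemma mat2_m22: "mat2 a b c = m22 a b b c"
  by (rule eq_matI) (auto simp: m22_def mat2_def dest!: less2_cases)

lemma one_m22: "1\<^sub>m 2 = m22 1 0 0 (1::'a::comm_ring_1)"
  by (rule eq_matI) (auto simp: m22_def dest!: less2_cases)

lemma conj_mat2:
  fixes p q r s a b c :: "'a::comm_ring_1"
  shows "m22 p q r s * mat2 a b c * (m22 p q r s)\<^sup>T =
    mat2 (p*p*a + 2*p*q*b + q*q*c) (p*r*a + (p*s+q*r)*b + q*s*c) (r*r*a + 2*r*s*b + s*s*c)"
  unfolding m22_transpose mat2_m22 m22_mult by (simp add: algebra_simps mult_2)

lemma invertible_m22:
  fixes p q r s :: "'a::comm_ring_1"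
  assumes "p * s - q * r dvd 1"
  shows "invertible_mat (m22 p q r s)"
proof -
  obtain i where i: "(p * s - q * r) * i = 1" using assms by (metis dvdE)
  let ?B = "m22 (s*i) (-q*i) (-r*i) (p*i)"
  have "m22 p q r s * ?B = 1\<^sub>m 2" unfolding m22_mult one_m22 using i by (simp add: algebra_simps)
  moreover have "?B * m22 p q r s = 1\<^sub>m 2" unfolding m22_mult one_m22 using i by (simp add: algebra_simps)
  ultimately show ?thesis unfolding invertible_mat_def inverts_mat_def square_mat.simps by auto
qed

lemma mat1_mult: "mat1 a * mat1 b = mat1 (a * b :: 'a::comm_ring_1)"
  by (rule eq_matI) (auto simp: mat1_def scalar_prod_def)

lemma mat1_transpose: "(mat1 a)\<^sup>T = mat1 a"
  by (rule eq_matI) (auto simp: mat1_def)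

lemma invertible_mat1:
  assumes "(s::'a::comm_ring_1) dvd 1" shows "invertible_mat (mat1 s)"
proof -
  obtain i where i: "s * i = 1" using assms by (metis dvdE)
  have "mat1 s * mat1 i = 1\<^sub>m 1" "mat1 i * mat1 s = 1\<^sub>m 1" using i
    by (auto simp: mat1_mult mat1_def scalar_prod_def intro!: eq_matI simp: mult.commute)
  then show ?thesis unfolding invertible_mat_def inverts_mat_def square_mat.simps by auto
qed

lemma congr_mat1:
  assumes "(s::'a::comm_ring_1) dvd 1" "b = s * a * s"
  shows "mat_congruent (mat1 a) (mat1 b)"
  unfolding mat_congruent_def
  by (rule bexI[of _ "mat1 s"]) (use assms invertible_mat1 in \<open>auto simp: mat1_mult mat1_transpose\<close>)

lemma congr_mat2:
  fixes p q r s a b c :: "'a::comm_ring_1"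
  assumes "p * s - q * r dvd 1"
    "a' = p*p*a + 2*p*q*b + q*q*c" "b' = p*r*a + (p*s+q*r)*b + q*s*c" "c' = r*r*a + 2*r*s*b + s*s*c"
  shows "mat_congruent (mat2 a b c) (mat2 a' b' c')"
  unfolding mat_congruent_def
  by (rule bexI[of _ "m22 p q r s"]) (use assms invertible_m22 in \<open>auto simp: conj_mat2\<close>)

definition cong2 :: "'a::comm_ring_1 \<Rightarrow> 'a \<Rightarrow> 'a \<Rightarrow> 'a \<Rightarrow> 'a \<Rightarrow> 'a \<Rightarrow> bool" where
  "cong2 a b c a' b' c' \<longleftrightarrow> (\<exists>p q r s. p * s - q * r dvd 1 \<and>
     a' = p*p*a + 2*p*q*b + q*q*c \<and> b' = p*r*a + (p*s+q*r)*b + q*s*c \<and> c' = r*r*a + 2*r*s*b + s*s*c)"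

lemma cong2_scale: assumes "cong2 a b c a' b' c'" shows "cong2 (k*a) (k*b) (k*c) (k*a') (k*b') (k*c')"
proof -
  obtain p q r s where h: "p * s - q * r dvd 1"
     "a' = p*p*a + 2*p*q*b + q*q*c" "b' = p*r*a + (p*s+q*r)*b + q*s*c" "c' = r*r*a + 2*r*s*b + s*s*c"
    using assms unfolding cong2_def by blast
  show ?thesis unfolding cong2_def
    by (rule exI[of _ p], rule exI[of _ q], rule exI[of _ r], rule exI[of _ s]) (use h in \<open>simp add: algebra_simps\<close>)
qed

lemma cong2_mat: "cong2 a b c a' b' c' \<Longrightarrow> mat_congruent (mat2 a b c) (mat2 a' b' c')"
  unfolding cong2_def using congr_mat2 by blast

lemma prime2: "prime CARD(2)" by simp

lemma P2: "(of_nat CARD(2) :: 2 padic_int) = 2" by simp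

lemma unit2_iff: "(x::2 padic_int) dvd 1 \<longleftrightarrow> \<not> 2 dvd x"
  using unit_iff[OF prime2, of x] by simp

lemma R2_01: "R (x::2 padic_int) 1 = 0 \<or> R x 1 = 1"
  using R_range[of x 1] by auto

lemma dvd2_iff: "2 dvd (x::2 padic_int) \<longleftrightarrow> R x 1 = 0"
  using dvd_p_iff[of x] by simp

lemma odd_sub1: "\<not> 2 dvd (x::2 padic_int) \<Longrightarrow> 2 dvd x - 1"
proof -
  assume "\<not> 2 dvd x"
  then have "R x 1 = 1" using dvd2_iff R2_01 by blast
  then have "R (x - 1) 1 = 0" using R1_one[where 'p=2] by (simp add: R_minus)
  then show ?thesis using dvd2_iff by blast
qed

lemma parity2: "2 dvd (x::2 padic_int) \<or> \<not> 2 dvd x - 1 \<Longrightarrow> True" by simp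

lemma odd_mult: "\<not> 2 dvd (x::2 padic_int) \<Longrightarrow> \<not> 2 dvd y \<Longrightarrow> \<not> 2 dvd x * y"
  by (metis is_unit_mult_iff unit2_iff)

lemma even_odd_add: "2 dvd (x::2 padic_int) \<Longrightarrow> \<not> 2 dvd y \<Longrightarrow> \<not> 2 dvd x + y"
  using dvd_add_right_iff by blast

lemma not2_dvd1: "\<not> 2 dvd (1::2 padic_int)"
  using p_not_dvd_1[where 'p=2] by simp

lemma hensel2:
  fixes A B C r :: "2 padic_int"
  assumes "2 dvd A * r * r + B * r + C" "\<not> 2 dvd 2 * A * r + B"
  shows "\<exists>w. A * w * w + B * w + C = 0"
  using hensel[OF prime2, of A r B C] assms by auto

lemma classify_hyp:
  fixes x z e :: "2 padic_int"
  assumes e: "e dvd 1" and xz: "2 dvd x * z"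
  shows "cong2 (2*x) e (2*z) 0 1 0"
proof -
  obtain ei where ei: "e * ei = 1" using e by (metis dvdE)
  define c where "c = x * z * ei * ei"
  have "2 dvd c * 1 * 1 + (-1) * 1 + 1" unfolding c_def using xz by simp
  moreover have "\<not> 2 dvd 2 * c * 1 + (-1)"
  proof
    assume "2 dvd 2 * c * 1 + (-1)"
    then have "2 dvd 2 * c - (2 * c * 1 + (-1))" by (intro dvd_diff) auto
    then show False using not2_dvd1 by simp
  qed
  ultimately obtain w where w: "c * w * w + (-1) * w + 1 = 0" using hensel2 by blast
  define p1 where "p1 = - z * w * ei"
  define g where "g = 2 * x * p1 + e"
  have "\<not> 2 dvd e" using e unit2_iff by blast
  then have "\<not> 2 dvd g" unfolding g_def by (intro even_odd_add) auto
  then obtain gi where gi: "g * gi = 1" using unit2_iff by (metis dvdE)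
  define mu where "mu = - x * gi * gi"
  define r where "r = gi + mu * p1"
  define A' where "A' = p1*p1*(2*x) + 2*p1*1*e + 1*1*(2*z)"
  have "A' = 2 * z * (c * w * w - w * (e * ei) + 1)"
    unfolding A'_def p1_def c_def by (simp add: algebra_simps)
  moreover have "c * w * w - w * (e * ei) + 1 = 0" using w ei by simp
  ultimately have A'0: "A' = 0" by simp
  have "p1*r*(2*x) + (p1*mu+1*r)*e + 1*mu*(2*z) = gi * g + mu * A'"
    unfolding A'_def r_def g_def by (simp add: algebra_simps)
  then have B': "p1*r*(2*x) + (p1*mu+1*r)*e + 1*mu*(2*z) = 1" using gi A'0 by (simp add: mult.commute)
  have "r*r*(2*x) + 2*r*mu*e + mu*mu*(2*z) = 2 * x * gi * gi + 2 * mu * (gi * g) + mu * mu * A'"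
    unfolding A'_def r_def g_def by (simp add: algebra_simps)
  then have C': "r*r*(2*x) + 2*r*mu*e + mu*mu*(2*z) = 0" using gi A'0 unfolding mu_def by (simp add: algebra_simps)
  have "p1 * mu - 1 * r = - gi" unfolding r_def by simp
  moreover have "- gi dvd 1" using gi by (metis minus_dvd_iff dvd_triv_right)
  ultimately have det: "p1 * mu - 1 * r dvd 1" by simp
  show ?thesis unfolding cong2_def
    by (rule exI[of _ p1], rule exI[of _ 1], rule exI[of _ r], rule exI[of _ mu])
      (use det A'0 B' C' in \<open>simp add: A'_def\<close>)
qed

lemma odd_sq_sub1: "\<not> 2 dvd (g::2 padic_int) \<Longrightarrow> 2 dvd g * g - 1"
proof -
  assume "\<not> 2 dvd g"
  then have "2 dvd g - 1" by (rule odd_sub1)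
  then have "2 dvd (g - 1) * (g + 1)" by simp
  then show ?thesis by (simp add: algebra_simps)
qed

lemma classify_A:
  fixes x z e :: "2 padic_int"
  assumes e: "\<not> 2 dvd e" and x: "\<not> 2 dvd x" and z: "\<not> 2 dvd z"
  shows "cong2 (2*x) e (2*z) 2 1 2"
proof -
  have "2 dvd x * 0 * 0 + e * 0 + (z - 1)" using odd_sub1[OF z] by simp
  moreover have "\<not> 2 dvd 2 * x * 0 + e" using e by simp
  ultimately obtain p where p: "x * p * p + e * p + (z - 1) = 0" using hensel2 by blast
  define g where "g = 2 * x * p + e"
  have "\<not> 2 dvd g" unfolding g_def using e by (intro even_odd_add) auto
  then obtain gi where gi: "g * gi = 1" using unit2_iff by (metis dvdE)
  have gg: "2 dvd g * g - 1" using odd_sq_sub1[OF \<open>\<not> 2 dvd g\<close>] .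
  have "2 dvd (x - 1) - (g * g - 1)" using odd_sub1[OF x] gg by (rule dvd_diff)
  then have "2 dvd (4 * x - g * g) * 0 * 0 + (g * g - 4 * x) * 0 + (x - g * g)" by (simp add: algebra_simps)
  moreover have "\<not> 2 dvd 2 * (4 * x - g * g) * 0 + (g * g - 4 * x)"
  proof
    assume "2 dvd 2 * (4 * x - g * g) * 0 + (g * g - 4 * x)"
    moreover have "4 * x = 2 * (2 * x)" by simp
    then have "(2::2 padic_int) dvd 4 * x" by (metis dvd_triv_left)
    ultimately have "2 dvd (g * g - 4 * x) + 4 * x" by (intro dvd_add) auto
    then have "2 dvd g * g" by simp
    then have "2 dvd g * g - (g * g - 1)" using gg by (rule dvd_diff)
    then show False using not2_dvd1 by simp
  qed
  ultimately obtain mu where mu: "(4 * x - g * g) * mu * mu + (g * g - 4 * x) * mu + (x - g * g) = 0"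
    using hensel2 by blast
  define l where "l = (1 - 2 * mu) * gi"
  define r where "r = l + mu * p"
  define A' where "A' = p*p*(2*x) + 2*p*1*e + 1*1*(2*z)"
  have "A' = 2 * (x * p * p + e * p + (z - 1)) + 2" unfolding A'_def by (simp add: algebra_simps)
  then have A'2: "A' = 2" using p by simp
  have "p*r*(2*x) + (p*mu+1*r)*e + 1*mu*(2*z) = (1 - 2 * mu) * (g * gi) + mu * A'"
    unfolding A'_def r_def g_def l_def by (simp add: algebra_simps)
  then have B': "p*r*(2*x) + (p*mu+1*r)*e + 1*mu*(2*z) = 1" using gi A'2 by (simp add: algebra_simps)
  have "x * (1 - 2 * mu) * (1 - 2 * mu) - g * g * (1 - mu + mu * mu) =
     (4 * x - g * g) * mu * mu + (g * g - 4 * x) * mu + (x - g * g)"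
    by (simp add: algebra_simps)
  then have xm: "x * (1 - 2 * mu) * (1 - 2 * mu) = g * g * (1 - mu + mu * mu)"
    using mu by simp
  have "x * l * l = (x * (1 - 2 * mu) * (1 - 2 * mu)) * (gi * gi)" unfolding l_def by (simp add: algebra_simps)
  also have "\<dots> = g * g * (1 - mu + mu * mu) * (gi * gi)" by (simp only: xm)
  also have "\<dots> = (g * gi) * (g * gi) * (1 - mu + mu * mu)" by (simp add: algebra_simps)
  finally have xl: "x * l * l = (g * gi) * (g * gi) * (1 - mu + mu * mu)" .
  have C1: "r*r*(2*x) + 2*r*mu*e + mu*mu*(2*z) = 2 * (x * l * l) + 2 * mu * (l * g) + mu * mu * A'"
    unfolding A'_def r_def g_def by (simp add: algebra_simps)
  have "l * g = (1 - 2 * mu) * (g * gi)" unfolding l_def by (simp add: algebra_simps)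
  then have lg: "l * g = 1 - 2 * mu" using gi by simp
  have xl1: "x * l * l = 1 - mu + mu * mu" using xl gi by simp
  have C': "r*r*(2*x) + 2*r*mu*e + mu*mu*(2*z) = 2" unfolding C1 lg xl1 A'2 by (simp add: algebra_simps)
  have "\<not> 2 dvd 1 - 2 * mu"
  proof
    assume "2 dvd 1 - 2 * mu"
    then have "2 dvd (1 - 2 * mu) + 2 * mu" by (intro dvd_add) auto
    then show False using not2_dvd1 by simp
  qed
  moreover have "\<not> 2 dvd gi" using gi unit2_iff by (metis dvd_triv_right)
  ultimately have "\<not> 2 dvd l" unfolding l_def by (rule odd_mult)
  then have "- l dvd 1" using unit2_iff by simp
  moreover have "p * mu - 1 * r = - l" unfolding r_def by simp
  ultimately have det: "p * mu - 1 * r dvd 1" by simp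
  show ?thesis unfolding cong2_def
    by (rule exI[of _ p], rule exI[of _ 1], rule exI[of _ r], rule exI[of _ mu])
      (use det A'2 B' C' in \<open>simp add: A'_def\<close>)
qed

lemma cond_inst:
  assumes "mat_inv_diff_integral (mat2 a0 b0 c0) (mat2 a b (c::'a::comm_ring_1))"
  shows "(a0 * c0 - b0 * b0) * (a * c - b * b) dvd (a * c - b * b) * c0 - (a0 * c0 - b0 * b0) * c"
        "(a0 * c0 - b0 * b0) * (a * c - b * b) dvd (a * c - b * b) * a0 - (a0 * c0 - b0 * b0) * a"
        "(a0 * c0 - b0 * b0) * (a * c - b * b) dvd (a * c - b * b) * (- b0) - (a0 * c0 - b0 * b0) * (- b)"
proof -
  have all: "\<forall>i<2. \<forall>j<2. det (mat2 a0 b0 c0) * det (mat2 a b c) dvd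
      det (mat2 a b c) * adj_mat (mat2 a0 b0 c0) $$ (i,j) - det (mat2 a0 b0 c0) * adj_mat (mat2 a b c) $$ (i,j)"
    using assms unfolding mat_inv_diff_integral_def mat2_dims .
  have "(0::nat) < 2" "(1::nat) < 2" by auto
  note x = all[rule_format, OF this(1) this(1)] all[rule_format, OF this(2) this(2)] all[rule_format, OF this(1) this(2)]
  show "(a0 * c0 - b0 * b0) * (a * c - b * b) dvd (a * c - b * b) * c0 - (a0 * c0 - b0 * b0) * c"
    using x(1) unfolding adj_mat2 det_mat2 mat2_idx .
  show "(a0 * c0 - b0 * b0) * (a * c - b * b) dvd (a * c - b * b) * a0 - (a0 * c0 - b0 * b0) * a"
    using x(2) unfolding adj_mat2 det_mat2 mat2_idx .
  show "(a0 * c0 - b0 * b0) * (a * c - b * b) dvd (a * c - b * b) * (- b0) - (a0 * c0 - b0 * b0) * (- b)"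
    using x(3) unfolding adj_mat2 det_mat2 mat2_idx .
qed

lemma cond_inst1:
  assumes "mat_inv_diff_integral (mat1 m) (mat1 (b::'a::comm_ring_1))"
  shows "m * b dvd b - m"
proof -
  have all: "\<forall>i<1. \<forall>j<1. det (mat1 m) * det (mat1 b) dvd
      det (mat1 b) * adj_mat (mat1 m) $$ (i,j) - det (mat1 m) * adj_mat (mat1 b) $$ (i,j)"
    using assms unfolding mat_inv_diff_integral_def mat1_dims .
  then show ?thesis unfolding adj_mat1 det_mat1 by simp
qed

lemma two_pow_nz: "(2::2 padic_int) ^ d \<noteq> 0"
  using pow_p_nz[of d, where 'p=2] by simp

lemma cancel2: "(2::2 padic_int) ^ d * x = 2 ^ d * y \<Longrightarrow> x = y"
  using mult_cancel[OF prime2 two_pow_nz] by blast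

lemma cancel_nz: "(t::2 padic_int) \<noteq> 0 \<Longrightarrow> t * x = t * y \<Longrightarrow> x = y"
  using mult_cancel[OF prime2] by blast

lemma nz_mult2: "(x::2 padic_int) \<noteq> 0 \<Longrightarrow> y \<noteq> 0 \<Longrightarrow> x * y \<noteq> 0"
  using no_zero_div[OF prime2] by blast

lemma unit_inv: "\<not> 2 dvd (x::2 padic_int) \<Longrightarrow> \<exists>xi. x * xi = 1 \<and> \<not> 2 dvd xi"
  using unit2_iff by (metis dvdE dvd_triv_right)

lemma derive_H:
  fixes a b c :: "2 padic_int"
  assumes d: "d \<ge> 1" and D: "a * c - b * b \<noteq> 0"
    and cond: "mat_inv_diff_integral (mat2 0 (2 ^ d) 0) (mat2 a b c)"
  shows "\<exists>x e z. \<not> 2 dvd e \<and> a = 2 ^ d * (2 * x) \<and> b = 2 ^ d * e \<and> c = 2 ^ d * (2 * z) \<and> (d \<ge> 2 \<longrightarrow> 2 dvd x)"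
proof -
  define T :: "2 padic_int" where "T = 2 ^ d"
  define D where "D = a * c - b * b"
  have T0: "T \<noteq> 0" unfolding T_def by (rule two_pow_nz)
  have TT0: "T * T \<noteq> 0" using T0 nz_mult2 by blast
  have "d = Suc (d - 1)" using d by simp
  then have Td: "T = 2 * 2 ^ (d - 1)" unfolding T_def by (metis power_Suc)
  have T2: "2 dvd T" unfolding Td by simp
  note cc = cond_inst[OF cond, folded T_def D_def]
  obtain y0 where y0: "D * 0 - (0 * 0 - T * T) * c = (0 * 0 - T * T) * D * y0" using cc(1) by blast
  have "T * T * c = T * T * (- D * y0)" using y0 by (simp add: algebra_simps)
  then have c: "c = D * (- y0)" using cancel_nz[OF TT0] by simp
  obtain y1 where y1: "D * 0 - (0 * 0 - T * T) * a = (0 * 0 - T * T) * D * y1" using cc(2) by blast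
  have "T * T * a = T * T * (- D * y1)" using y1 by (simp add: algebra_simps)
  then have a: "a = D * (- y1)" using cancel_nz[OF TT0] by simp
  obtain t where t: "D * (- T) - (0 * 0 - T * T) * (- b) = (0 * 0 - T * T) * D * t" using cc(3) by blast
  have "T * (T * b) = T * (D * (T * t - 1))" using t by (simp add: algebra_simps)
  then have b: "T * b = D * (T * t - 1)" using cancel_nz[OF T0] by simp
  define eta where "eta = T * T * (- y1) * (- y0) - (T * t - 1) * (T * t - 1)"
  have "T * T * D = T * T * (a * c) - (T * b) * (T * b)" unfolding D_def by (simp add: algebra_simps)
  also have "\<dots> = D * (D * eta)" unfolding b eta_def by (simp add: a c algebra_simps)
  finally have "D * (T * T) = D * (D * eta)" by (simp add: algebra_simps)
  then have TTe: "T * T = D * eta" using cancel_nz D unfolding D_def by blast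
  have "\<not> 2 dvd T * t - 1"
  proof
    assume "2 dvd T * t - 1"
    moreover have "2 dvd T * t" unfolding Td by simp
    ultimately have "2 dvd T * t - (T * t - 1)" by (metis dvd_diff)
    then show False using not2_dvd1 by simp
  qed
  then have odd1: "\<not> 2 dvd (T * t - 1) * (T * t - 1)" by (intro odd_mult)
  have "\<not> 2 dvd eta"
  proof
    assume "2 dvd eta"
    moreover have "2 dvd T * T * (- y1) * (- y0)" using T2 by (intro dvd_mult2)
    ultimately have "2 dvd T * T * (- y1) * (- y0) - eta" by (metis dvd_diff)
    then show False using odd1 unfolding eta_def by simp
  qed
  then obtain ei where ei: "eta * ei = 1" and nei: "\<not> 2 dvd ei" using unit_inv by blast
  have DD: "D = T * T * ei" using TTe ei by (metis mult.assoc mult.commute mult_1)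
  have "T * b = T * (T * ei * (T * t - 1))" using b DD by (simp add: algebra_simps)
  then have b': "b = T * (ei * (T * t - 1))" using cancel_nz[OF T0] by (simp add: algebra_simps)
  define x where "x = 2 ^ (d - 1) * ei * (- y1)"
  define z where "z = 2 ^ (d - 1) * ei * (- y0)"
  define e where "e = ei * (T * t - 1)"
  have ne: "\<not> 2 dvd e" unfolding e_def using nei \<open>\<not> 2 dvd T * t - 1\<close> by (rule odd_mult)
  have "a = T * (2 * x)" unfolding a DD x_def Td by (simp add: algebra_simps)
  moreover have "c = T * (2 * z)" unfolding c DD z_def Td by (simp add: algebra_simps)
  moreover have "b = T * e" using b' e_def by simp
  moreover have "d \<ge> 2 \<longrightarrow> 2 dvd x"
  proof
    assume "d \<ge> 2"
    then have "d - 1 = Suc (d - 2)" by simp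
    then have "2 ^ (d - 1) = (2::2 padic_int) * 2 ^ (d - 2)" by (simp only: power_Suc)
    then show "2 dvd x" unfolding x_def by simp
  qed
  ultimately show ?thesis using ne unfolding T_def by blast
qed

lemma odd3: "\<not> 2 dvd (3::2 padic_int)"
  unfolding dvd2_iff using R_numeral[of "num.Bit1 num.One" 1, where 'p=2] by simp

lemma odd_nz: "\<not> 2 dvd (x::2 padic_int) \<Longrightarrow> x \<noteq> 0" by auto

lemma odd_1_minus_even: "2 dvd (y::2 padic_int) \<Longrightarrow> \<not> 2 dvd 1 - y"
proof
  assume "2 dvd y" "2 dvd 1 - y"
  then have "2 dvd (1 - y) + y" by (intro dvd_add)
  then show False using not2_dvd1 by simp
qed

lemma odd_1_plus_even: "2 dvd (y::2 padic_int) \<Longrightarrow> \<not> 2 dvd 1 + y"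
  using odd_1_minus_even[of "- y"] by simp

lemma derive_A:
  fixes a b c :: "2 padic_int"
  assumes d: "d \<ge> 1" and D: "a * c - b * b \<noteq> 0"
    and cond: "mat_inv_diff_integral (mat2 (2 ^ (d + 1)) (2 ^ d) (2 ^ (d + 1))) (mat2 a b c)"
  shows "\<exists>x e z. \<not> 2 dvd e \<and> a = 2 ^ d * (2 * x) \<and> b = 2 ^ d * e \<and> c = 2 ^ d * (2 * z) \<and>
     (d \<ge> 2 \<longrightarrow> \<not> 2 dvd x \<and> \<not> 2 dvd z)"
proof -
  define T :: "2 padic_int" where "T = 2 ^ d"
  define D where "D = a * c - b * b"
  have T0: "T \<noteq> 0" unfolding T_def by (rule two_pow_nz)
  have "d = Suc (d - 1)" using d by simp
  then have Td: "T = 2 * 2 ^ (d - 1)" unfolding T_def by (metis power_Suc)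
  have T2: "2 dvd T" unfolding Td by simp
  have 3: "(3::2 padic_int) \<noteq> 0" using odd3 odd_nz by blast
  have T30: "3 * T \<noteq> 0" using T0 3 nz_mult2 by blast
  have p1: "(2::2 padic_int) ^ (d + 1) = 2 * T" unfolding T_def by simp
  note cc = cond_inst[OF cond, unfolded p1, folded T_def D_def]
  obtain y0 where y0: "D * (2 * T) - (2 * T * (2 * T) - T * T) * c = (2 * T * (2 * T) - T * T) * D * y0"
    using cc(1) by blast
  have "T * (3 * T * c) = T * (D * (2 - 3 * T * y0))" using y0 by (simp add: algebra_simps)
  then have c: "3 * T * c = D * (2 - 3 * T * y0)" using cancel_nz[OF T0] by blast
  obtain y1 where y1: "D * (2 * T) - (2 * T * (2 * T) - T * T) * a = (2 * T * (2 * T) - T * T) * D * y1"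
    using cc(2) by blast
  have "T * (3 * T * a) = T * (D * (2 - 3 * T * y1))" using y1 by (simp add: algebra_simps)
  then have a: "3 * T * a = D * (2 - 3 * T * y1)" using cancel_nz[OF T0] by blast
  obtain y2 where y2: "D * (- T) - (2 * T * (2 * T) - T * T) * (- b) = (2 * T * (2 * T) - T * T) * D * y2"
    using cc(3) by blast
  have "T * (3 * T * b) = T * (D * (1 + 3 * T * y2))" using y2 by (simp add: algebra_simps)
  then have b: "3 * T * b = D * (1 + 3 * T * y2)" using cancel_nz[OF T0] by blast
  define z0 where "z0 = 2 - 3 * T * y0"
  define z1 where "z1 = 2 - 3 * T * y1"
  define z2 where "z2 = 1 + 3 * T * y2"
  define eta where "eta = z1 * z0 - z2 * z2"
  have "(3 * T) * (3 * T) * D = (3 * T * a) * (3 * T * c) - (3 * T * b) * (3 * T * b)"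
    unfolding D_def by (simp add: algebra_simps)
  also have "\<dots> = D * (D * eta)" unfolding a b c eta_def z0_def z1_def z2_def by (simp add: algebra_simps)
  finally have "D * ((3 * T) * (3 * T)) = D * (D * eta)" by (simp add: algebra_simps)
  then have TTe: "(3 * T) * (3 * T) = D * eta" using cancel_nz D unfolding D_def by blast
  have ez0: "2 dvd z0" unfolding z0_def using T2 by (intro dvd_diff) auto
  have "2 dvd 3 * T * y2" using T2 by (simp add: dvd_mult)
  then have oz2: "\<not> 2 dvd z2" unfolding z2_def by (rule odd_1_plus_even)
  then have oz22: "\<not> 2 dvd z2 * z2" by (intro odd_mult)
  have "\<not> 2 dvd eta"
  proof
    assume "2 dvd eta"
    moreover have "2 dvd z1 * z0" using ez0 by simp
    ultimately have "2 dvd z1 * z0 - eta" by (metis dvd_diff)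
    then show False using oz22 unfolding eta_def by simp
  qed
  then obtain ei where ei: "eta * ei = 1" and nei: "\<not> 2 dvd ei" using unit_inv by blast
  have DD: "D = (3 * T) * (3 * T) * ei" using TTe ei by (metis mult.assoc mult.commute mult_1)
  have "(3 * T) * c = (3 * T) * (T * (2 * (3 * ei * (1 - 3 * 2 ^ (d - 1) * y0))))"
    using c unfolding DD by (simp add: Td algebra_simps)
  then have c': "c = T * (2 * (3 * ei * (1 - 3 * 2 ^ (d - 1) * y0)))" using cancel_nz[OF T30] by blast
  have "(3 * T) * a = (3 * T) * (T * (2 * (3 * ei * (1 - 3 * 2 ^ (d - 1) * y1))))"
    using a unfolding DD by (simp add: Td algebra_simps)
  then have a': "a = T * (2 * (3 * ei * (1 - 3 * 2 ^ (d - 1) * y1)))" using cancel_nz[OF T30] by blast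
  have "(3 * T) * b = (3 * T) * (T * (3 * ei * z2))"
    using b unfolding DD z2_def by (simp add: algebra_simps)
  then have b': "b = T * (3 * ei * z2)" using cancel_nz[OF T30] by blast
  have o3ei: "\<not> 2 dvd 3 * ei" using odd3 nei by (rule odd_mult)
  have ne: "\<not> 2 dvd 3 * ei * z2" using o3ei oz2 by (rule odd_mult)
  have "d \<ge> 2 \<longrightarrow> \<not> 2 dvd 3 * ei * (1 - 3 * 2 ^ (d - 1) * y1) \<and> \<not> 2 dvd 3 * ei * (1 - 3 * 2 ^ (d - 1) * y0)"
  proof
    assume "d \<ge> 2"
    then have "d - 1 = Suc (d - 2)" by simp
    then have e2: "2 ^ (d - 1) = (2::2 padic_int) * 2 ^ (d - 2)" by (simp only: power_Suc)
    have h: "(2::2 padic_int) dvd 2 ^ (d - 1)" unfolding e2 by simp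
    have "\<not> 2 dvd 1 - 3 * 2 ^ (d - 1) * y" for y :: "2 padic_int"
      by (rule odd_1_minus_even) (rule dvd_mult2[OF dvd_mult[OF h]])
    then show "\<not> 2 dvd 3 * ei * (1 - 3 * 2 ^ (d - 1) * y1) \<and> \<not> 2 dvd 3 * ei * (1 - 3 * 2 ^ (d - 1) * y0)"
      using o3ei odd_mult by blast
  qed
  then show ?thesis using ne a' b' c' unfolding T_def by blast
qed

lemma odd_unit: "\<not> 2 dvd (e::2 padic_int) \<Longrightarrow> e dvd 1" using unit2_iff by blast

lemma final2_d1:
  fixes x e z :: "2 padic_int"
  assumes e: "\<not> 2 dvd e"
  shows "\<exists>N \<in> {mat2 0 2 0, mat2 4 2 4}. mat_congruent (mat2 (2 * (2 * x)) (2 * e) (2 * (2 * z))) N"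
proof (cases "2 dvd x * z")
  case True
  have "cong2 (2 * (2 * x)) (2 * e) (2 * (2 * z)) (2 * 0) (2 * 1) (2 * 0)"
    by (rule cong2_scale[OF classify_hyp[OF odd_unit[OF e] True]])
  then have "mat_congruent (mat2 (2 * (2 * x)) (2 * e) (2 * (2 * z))) (mat2 0 2 0)" using cong2_mat by fastforce
  then show ?thesis by blast
next
  case False
  then have "\<not> 2 dvd x" "\<not> 2 dvd z" by auto
  have "cong2 (2 * (2 * x)) (2 * e) (2 * (2 * z)) (2 * 2) (2 * 1) (2 * 2)"
    by (rule cong2_scale[OF classify_A[OF e \<open>\<not> 2 dvd x\<close> \<open>\<not> 2 dvd z\<close>]])
  then have "mat_congruent (mat2 (2 * (2 * x)) (2 * e) (2 * (2 * z))) (mat2 4 2 4)" using cong2_mat by fastforce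
  then show ?thesis by blast
qed

lemma final2_H:
  fixes x e z :: "2 padic_int"
  assumes e: "\<not> 2 dvd e" and x: "2 dvd x"
  shows "mat_congruent (mat2 (2 ^ d * (2 * x)) (2 ^ d * e) (2 ^ d * (2 * z))) (mat2 0 (2 ^ d) 0)"
proof -
  have "2 dvd x * z" using x by simp
  have "cong2 (2 ^ d * (2 * x)) (2 ^ d * e) (2 ^ d * (2 * z)) (2 ^ d * 0) (2 ^ d * 1) (2 ^ d * 0)"
    by (rule cong2_scale[OF classify_hyp[OF odd_unit[OF e] \<open>2 dvd x * z\<close>]])
  then show ?thesis using cong2_mat by fastforce
qed

lemma final2_A:
  fixes x e z :: "2 padic_int"
  assumes e: "\<not> 2 dvd e" and x: "\<not> 2 dvd x" and z: "\<not> 2 dvd z"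
  shows "mat_congruent (mat2 (2 ^ d * (2 * x)) (2 ^ d * e) (2 ^ d * (2 * z))) (mat2 (2 ^ (d + 1)) (2 ^ d) (2 ^ (d + 1)))"
proof -
  have "cong2 (2 ^ d * (2 * x)) (2 ^ d * e) (2 ^ d * (2 * z)) (2 ^ d * 2) (2 ^ d * 1) (2 ^ d * 2)"
    by (rule cong2_scale[OF classify_A[OF e x z]])
  then have "mat_congruent (mat2 (2 ^ d * (2 * x)) (2 ^ d * e) (2 ^ d * (2 * z))) (mat2 (2 ^ d * 2) (2 ^ d * 1) (2 ^ d * 2))"
    by (rule cong2_mat)
  moreover have "(2::2 padic_int) ^ (d + 1) = 2 ^ d * 2" by simp
  ultimately show ?thesis by (simp add: mult.commute)
qed

lemma sq8:
  fixes v t :: "2 padic_int"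
  assumes v: "\<not> 2 dvd v" and t: "\<not> 2 dvd t" and d8: "8 dvd t - v"
  shows "\<exists>s. s dvd 1 \<and> t = s * v * s"
proof -
  obtain vi where vi: "v * vi = 1" using unit_inv[OF v] by blast
  define w where "w = t * vi"
  have "w - 1 = (t - v) * vi" unfolding w_def using vi by (simp add: algebra_simps)
  then have "8 dvd w - 1" using d8 by simp
  then obtain k where k: "w - 1 = 8 * k" by blast
  have "2 dvd 1 * 1 * 1 + (-1) * 1 + (- 2 * k)" by simp
  moreover have "\<not> 2 dvd 2 * 1 * 1 + (-1::2 padic_int)" using not2_dvd1 by simp
  ultimately obtain y where y: "1 * y * y + (-1) * y + (- 2 * k) = 0" using hensel2 by blast
  define s where "s = 2 * y - 1"
  have "s * s = 4 * (y * y - y - 2 * k) + (8 * k + 1)" unfolding s_def by (simp add: algebra_simps)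
  also have "y * y - y - 2 * k = 0" using y by simp
  finally have ss: "s * s = w" using k by (simp add: algebra_simps)
  have "\<not> 2 dvd 1 - 2 * y" by (rule odd_1_minus_even) simp
  moreover have "s = - (1 - 2 * y)" unfolding s_def by simp
  ultimately have "\<not> 2 dvd s" by (metis dvd_minus_iff)
  then have "s dvd 1" by (rule odd_unit)
  moreover have "s * v * s = t" using ss vi unfolding w_def
    by (metis mult.assoc mult.commute mult_1)
  ultimately show ?thesis by metis
qed

lemma derive_1:
  fixes k \<beta> :: "2 padic_int"
  assumes d: "d \<ge> 1" and k: "\<not> 2 dvd k" and b0: "\<beta> \<noteq> 0"
    and cond: "mat_inv_diff_integral (mat1 (2 ^ d * k)) (mat1 \<beta>)"
  shows "\<exists>v. \<not> 2 dvd v \<and> \<beta> = 2 ^ d * v \<and> 2 ^ d dvd v - k"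
proof -
  have c: "(2 ^ d * k) * \<beta> dvd \<beta> - 2 ^ d * k" using cond_inst1[OF cond] .
  obtain b v where bv: "\<beta> = of_nat CARD(2) ^ b * v" "v dvd 1" using val_decomp[OF prime2 b0] by blast
  then have bv': "\<beta> = 2 ^ b * v" by simp
  have ku: "k dvd 1" using k odd_unit by blast
  have "d = b \<and> of_nat CARD(2) ^ d dvd (v - k)"
    using val_compare[OF prime2 ku bv(2) d] c unfolding bv' by simp
  then show ?thesis using bv' bv(2) unit2_iff by auto
qed

lemma residue8:
  fixes v :: "2 padic_int"
  assumes v: "\<not> 2 dvd v"
  shows "\<exists>c::int. c \<in> {1,3,5,7} \<and> 8 dvd of_int c - v \<and> c mod 4 = R v 2"
proof -
  define c where "c = R v 3"
  have r1: "R v 1 = 1" using v dvd2_iff R2_01 by blast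
  have "c mod 2 = R v 1" unfolding c_def using R_compat[of 1 3 v] by simp
  then have codd: "c mod 2 = 1" using r1 by simp
  have "0 \<le> c" "c < 8" unfolding c_def using R_range[of v 3] by auto
  then have "c = 1 \<or> c = 3 \<or> c = 5 \<or> c = 7" using codd by presburger
  then have "c \<in> {1,3,5,7}" by auto
  moreover have "R (of_int c - v) 3 = 0" unfolding R_minus R_of_int c_def using R_mod[of v 3] by simp
  then have "8 dvd of_int c - v" using dvd_iff_R[of 3 "of_int c - v"] by simp
  moreover have "c mod 4 = R v 2" unfolding c_def using R_compat[of 2 3 v] by simp
  ultimately show ?thesis by blast
qed

lemma final1:
  fixes k \<beta> :: "2 padic_int"
  assumes d: "d \<ge> 1" and k: "\<not> 2 dvd k" and b0: "\<beta> \<noteq> 0"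
    and cond: "mat_inv_diff_integral (mat1 (2 ^ d * k)) (mat1 \<beta>)"
  shows "d \<ge> 3 \<Longrightarrow> mat_congruent (mat1 \<beta>) (mat1 (2 ^ d * k))"
    and "\<exists>c::int. c \<in> {1,3,5,7} \<and> (d \<ge> 2 \<longrightarrow> c mod 4 = R k 2) \<and> mat_congruent (mat1 \<beta>) (mat1 (2 ^ d * of_int c))"
proof -
  obtain v where v: "\<not> 2 dvd v" "\<beta> = 2 ^ d * v" "2 ^ d dvd v - k" using derive_1[OF d k b0 cond] by blast
  {
    assume d3: "d \<ge> 3"
    have "(2::2 padic_int) ^ d = 8 * 2 ^ (d - 3)"
    proof -
      have "d = (d - 3) + 3" using d3 by simp
      then have "(2::2 padic_int) ^ d = 2 ^ (d - 3) * 2 ^ 3" by (metis power_add)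
      then show ?thesis by simp
    qed
    then have "8 dvd v - k" using v(3) by (metis dvd_mult_left)
    then have "8 dvd k - v" by (metis dvd_minus_iff minus_diff_eq)
    then obtain s where s: "s dvd 1" "k = s * v * s" using sq8[OF v(1) k] by blast
    show "mat_congruent (mat1 \<beta>) (mat1 (2 ^ d * k))"
      by (rule congr_mat1[OF s(1)]) (simp add: v(2) s(2) algebra_simps)
  }
  obtain c where c: "c \<in> {1,3,5,7}" "8 dvd of_int c - v" "c mod 4 = R v 2" using residue8[OF v(1)] by blast
  have d2: "c mod 4 = R k 2" if "d \<ge> 2"
  proof -
    have "(2::2 padic_int) ^ d = 4 * 2 ^ (d - 2)"
    proof -
      have "d = (d - 2) + 2" using that by simp
      then have "(2::2 padic_int) ^ d = 2 ^ (d - 2) * 2 ^ 2" by (metis power_add)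
      then show ?thesis by simp
    qed
    then have "4 dvd v - k" using v(3) by (metis dvd_mult_left)
    then have "R (v - k) 2 = 0" using dvd_iff_R[of 2 "v - k"] by simp
    then have "(R v 2 - R k 2) mod 4 = 0" by (simp add: R_minus)
    moreover have "0 \<le> R v 2" "R v 2 < 4" "0 \<le> R k 2" "R k 2 < 4" using R_range[of v 2] R_range[of k 2] by auto
    ultimately have "R v 2 = R k 2" by presburger
    then show ?thesis using c(3) by simp
  qed
  have "R (of_int c :: 2 padic_int) 1 = 1" using c(1) by (auto simp: R_of_int)
  then have oc: "\<not> 2 dvd (of_int c :: 2 padic_int)" using dvd2_iff by simp
  obtain s where s: "s dvd 1" "of_int c = s * v * s" using sq8[OF v(1) oc c(2)] by blast
  have "mat_congruent (mat1 \<beta>) (mat1 (2 ^ d * of_int c))"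
    by (rule congr_mat1[OF s(1)]) (simp add: v(2) s(2) algebra_simps)
  then show "\<exists>c::int. c \<in> {1,3,5,7} \<and> (d \<ge> 2 \<longrightarrow> c mod 4 = R k 2) \<and> mat_congruent (mat1 \<beta>) (mat1 (2 ^ d * of_int c))"
    using c(1) d2 by blast
qed

lemma num_neq2: "(numeral a mod 32 :: int) \<noteq> numeral b mod 32 \<Longrightarrow> (numeral a :: 2 padic_int) \<noteq> numeral b"
proof
  assume "(numeral a :: 2 padic_int) = numeral b" "(numeral a mod 32 :: int) \<noteq> numeral b mod 32"
  then have "R (numeral a :: 2 padic_int) 5 = R (numeral b :: 2 padic_int) 5" by simp
  then show False using \<open>(numeral a mod 32 :: int) \<noteq> numeral b mod 32\<close> by (simp add: R_numeral)
qed

lemma zero_neq2: "(numeral b mod 32 :: int) \<noteq> 0 \<Longrightarrow> (0 :: 2 padic_int) \<noteq> numeral b"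
proof
  assume "(0 :: 2 padic_int) = numeral b" "(numeral b mod 32 :: int) \<noteq> 0"
  then have "R (0 :: 2 padic_int) 5 = R (numeral b :: 2 padic_int) 5" by simp
  then show False using \<open>(numeral b mod 32 :: int) \<noteq> 0\<close> by (simp add: R_numeral R_zero)
qed

lemma mat1_neq_mat2[simp]: "mat1 a \<noteq> mat2 b c e" "mat2 b c e \<noteq> mat1 a"
  by (metis mat1_dims(1) mat2_dims(1) numeral_One numeral_eq_iff semiring_norm(85))+

lemma dvd8_num: "8 dvd (numeral t :: 2 padic_int) \<Longrightarrow> (numeral t mod 8 :: int) = 0"
  using dvd_iff_R[of 3 "numeral t :: 2 padic_int"] by (simp add: R_numeral)

lemma odd_of_int: "kk \<in> {1,3,5,7::int} \<Longrightarrow> \<not> 2 dvd (of_int kk :: 2 padic_int)"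
  unfolding dvd2_iff by (auto simp: R_of_int)

lemma if_helper:
  assumes "i0 \<in> {1..4::nat}" "M \<in> T_set i0" "\<And>i. M \<in> T_set i \<Longrightarrow> i \<in> {1..4} \<Longrightarrow> i = i0"
    "N \<in> T_set i0" "mat_congruent M' N"
  shows "if (\<exists>i \<in> {1..4::nat}. M \<in> T_set i)
         then (\<forall>i \<in> {1..4::nat}. M \<in> T_set i \<longrightarrow> (\<exists>N \<in> T_set i. mat_congruent M' N))
         else mat_congruent M' M"
proof -
  have "\<forall>i\<in>{1..4}. M \<in> T_set i \<longrightarrow> (\<exists>N\<in>T_set i. mat_congruent M' N)"
  proof (intro ballI impI)
    fix i assume "i \<in> {1..4::nat}" "M \<in> T_set i"
    then have "i = i0" using assms(3) by blast
    then show "\<exists>N\<in>T_set i. mat_congruent M' N" using assms(4,5) by blast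
  qed
  moreover have "\<exists>i \<in> {1..4::nat}. M \<in> T_set i" using assms(1,2) by blast
  ultimately show ?thesis by simp
qed

lemma main1:
  fixes M M' :: "2 padic_int mat"
  assumes d: "d \<ge> 1" and kk: "kk \<in> {1,3,5,7::int}" and M: "M = mat1 (2 ^ d * of_int kk)"
    and M': "M' \<in> carrier_mat 1 1" and det: "det M' \<noteq> 0" and cond: "mat_inv_diff_integral M M'"
  shows "if (\<exists>i \<in> {1..4::nat}. M \<in> T_set i)
         then (\<forall>i \<in> {1..4::nat}. M \<in> T_set i \<longrightarrow> (\<exists>N \<in> T_set i. mat_congruent M' N))
         else mat_congruent M' M"
proof -
  define \<beta> where "\<beta> = M' $$ (0,0)"
  have M'eq: "M' = mat1 \<beta>" using mat1_eq[OF M'] \<beta>_def by simp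
  have b0: "\<beta> \<noteq> 0" using det M'eq by simp
  have k: "\<not> 2 dvd (of_int kk :: 2 padic_int)" using odd_of_int[OF kk] .
  note F = final1[OF d k b0 cond[unfolded M M'eq]]
  consider "d = 1" | "d = 2" | "d \<ge> 3" using d by linarith
  then show ?thesis
  proof cases
    case 1
    obtain c where c: "c \<in> {1,3,5,7}" "mat_congruent (mat1 \<beta>) (mat1 (2 ^ d * of_int c))" using F(2) by blast
    have Mv: "M \<in> T_set 1" using kk unfolding M 1 T_set_def by auto
    have Nv: "mat1 ((2::2 padic_int) ^ d * of_int c) \<in> T_set 1" using c(1) unfolding 1 T_set_def by auto
    have only: "i = 1" if "M \<in> T_set i" "i \<in> {1..4}" for i
      using kk that unfolding M 1 T_set_def by (auto simp: mat1_eq_iff num_neq2 split: if_splits)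
    show ?thesis by (rule if_helper[of 1, OF _ Mv only Nv]) (use c(2) M'eq in auto)
  next
    case 2
    obtain c where c: "c \<in> {1,3,5,7}" "c mod 4 = R (of_int kk :: 2 padic_int) 2"
      "mat_congruent (mat1 \<beta>) (mat1 (2 ^ d * of_int c))" using F(2) 2 by auto
    have ck: "c mod 4 = kk mod 4" using c(2) by (simp add: R_of_int)
    show ?thesis
    proof (cases "kk \<in> {1,5}")
      case True
      have Mv: "M \<in> T_set 3" using True unfolding M 2 T_set_def by auto
      have "c \<in> {1,5}" using ck c(1) True by auto
      then have Nv: "mat1 ((2::2 padic_int) ^ d * of_int c) \<in> T_set 3" unfolding 2 T_set_def by auto
      have only: "i = 3" if "M \<in> T_set i" "i \<in> {1..4}" for i
        using True that unfolding M 2 T_set_def by (auto simp: mat1_eq_iff num_neq2 split: if_splits)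
      show ?thesis by (rule if_helper[OF _ Mv only Nv]) (use c(3) M'eq in auto)
    next
      case False
      then have kk': "kk \<in> {3,7}" using kk by auto
      have Mv: "M \<in> T_set 4" using kk' unfolding M 2 T_set_def by auto
      have "c \<in> {3,7}" using ck c(1) kk' by auto
      then have Nv: "mat1 ((2::2 padic_int) ^ d * of_int c) \<in> T_set 4" unfolding 2 T_set_def by auto
      have only: "i = 4" if "M \<in> T_set i" "i \<in> {1..4}" for i
        using kk' that unfolding M 2 T_set_def by (auto simp: mat1_eq_iff num_neq2 split: if_splits)
      show ?thesis by (rule if_helper[OF _ Mv only Nv]) (use c(3) M'eq in auto)
    qed
  next
    case 3
    have "(2::2 padic_int) ^ d = 8 * 2 ^ (d - 3)"
    proof -
      have "d = (d - 3) + 3" using 3 by simp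
      then have "(2::2 padic_int) ^ d = 2 ^ (d - 3) * 2 ^ 3" by (metis power_add)
      then show ?thesis by simp
    qed
    then have d8: "8 dvd (2 ^ d * of_int kk :: 2 padic_int)" by simp
    have notT: "\<not> (\<exists>i\<in>{1..4::nat}. M \<in> T_set i)"
    proof
      assume "\<exists>i\<in>{1..4::nat}. M \<in> T_set i"
      then obtain i where "M \<in> T_set i" by blast
      then have "2 ^ d * of_int kk \<in> {2, 6, 10, 14, 4, 20, 12, 28 :: 2 padic_int}"
        unfolding M T_set_def by (auto simp: mat1_eq_iff split: if_splits)
      then show False using d8 by (auto dest!: dvd8_num)
    qed
    show ?thesis using notT F(1)[OF 3] M M'eq by simp
  qed
qed

lemma sym_entry:
  assumes "M' \<in> carrier_mat 2 2" "symmetric_mat M'"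
  shows "M' $$ (1,0) = M' $$ (0,1)"
proof -
  have "M'\<^sup>T = M'" using assms(2) unfolding symmetric_mat_def by simp
  then have "M'\<^sup>T $$ (1,0) = M' $$ (1,0)" by simp
  moreover have "M'\<^sup>T $$ (1,0) = M' $$ (0,1)" using assms(1) by (simp add: index_transpose_mat)
  ultimately show ?thesis by simp
qed

lemma pow_ne2: "d \<ge> 2 \<Longrightarrow> (2::2 padic_int) ^ d \<noteq> 2"
proof
  assume d: "d \<ge> 2" and e: "(2::2 padic_int) ^ d = 2"
  have "d = (d - 2) + 2" using d by simp
  then have "(2::2 padic_int) ^ d = 2 ^ (d - 2) * 2 ^ 2" by (metis power_add)
  then have "4 dvd (2::2 padic_int) ^ d" by simp
  then have "4 dvd (2::2 padic_int)" using e by simp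
  then have "R (2::2 padic_int) 2 = 0" using dvd_iff_R[of 2 "2::2 padic_int"] by simp
  then show False by (simp add: R_numeral)
qed

lemma main2:
  fixes M M' :: "2 padic_int mat"
  assumes d: "d \<ge> 1" and M: "M = mat2 0 (2 ^ d) 0 \<or> M = mat2 (2 ^ (d + 1)) (2 ^ d) (2 ^ (d + 1))"
    and M': "M' \<in> carrier_mat 2 2" and sym: "symmetric_mat M'" and det: "det M' \<noteq> 0"
    and cond: "mat_inv_diff_integral M M'"
  shows "if (\<exists>i \<in> {1..4::nat}. M \<in> T_set i)
         then (\<forall>i \<in> {1..4::nat}. M \<in> T_set i \<longrightarrow> (\<exists>N \<in> T_set i. mat_congruent M' N))
         else mat_congruent M' M"
proof -
  define a where "a = M' $$ (0,0)"
  define b where "b = M' $$ (0,1)"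
  define c where "c = M' $$ (1,1)"
  have M'eq: "M' = mat2 a b c" unfolding a_def b_def c_def by (rule mat2_eq[OF M' sym_entry[OF M' sym]])
  have D: "a * c - b * b \<noteq> 0" using det M'eq by simp
  have ex: "\<exists>x e z. \<not> 2 dvd e \<and> a = 2 ^ d * (2 * x) \<and> b = 2 ^ d * e \<and> c = 2 ^ d * (2 * z) \<and>
     (d \<ge> 2 \<longrightarrow> (if M = mat2 0 (2 ^ d) 0 then 2 dvd x else \<not> 2 dvd x \<and> \<not> 2 dvd z))"
  proof (cases "M = mat2 0 (2 ^ d) 0")
    case True
    then show ?thesis using derive_H[OF d D cond[unfolded True M'eq]] by auto
  next
    case False
    then have MA: "M = mat2 (2 ^ (d + 1)) (2 ^ d) (2 ^ (d + 1))" using M by blast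
    show ?thesis using derive_A[OF d D cond[unfolded MA M'eq]] False by auto
  qed
  then obtain x e z where xez: "\<not> 2 dvd e" "a = 2 ^ d * (2 * x)" "b = 2 ^ d * e" "c = 2 ^ d * (2 * z)"
     "d \<ge> 2 \<Longrightarrow> (if M = mat2 0 (2 ^ d) 0 then 2 dvd x else \<not> 2 dvd x \<and> \<not> 2 dvd z)" by blast
  consider "d = 1" | "d \<ge> 2" using d by linarith
  then show ?thesis
  proof cases
    case 1
    have Mv: "M \<in> T_set 2" using M unfolding 1 T_set_def by auto
    have only: "i = 2" if "M \<in> T_set i" "i \<in> {1..4}" for i
      using M that unfolding 1 T_set_def by (auto split: if_splits)
    obtain N where N: "N \<in> {mat2 0 2 0, mat2 4 2 4}" "mat_congruent (mat2 (2 * (2 * x)) (2 * e) (2 * (2 * z))) N"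
      using final2_d1[OF xez(1)] by blast
    have Nv: "N \<in> T_set 2" using N(1) unfolding T_set_def by auto
    have cg: "mat_congruent M' N" using N(2) unfolding M'eq xez(2-4) 1 by simp
    show ?thesis by (rule if_helper[OF _ Mv only Nv cg]) auto
  next
    case 2
    have ne: "(2::2 padic_int) ^ d \<noteq> 2" using pow_ne2[OF 2] .
    have notT: "\<not> (\<exists>i\<in>{1..4::nat}. M \<in> T_set i)"
    proof
      assume "\<exists>i\<in>{1..4::nat}. M \<in> T_set i"
      then obtain i where "M \<in> T_set i" by blast
      then show False using M ne unfolding T_set_def by (auto simp: mat2_eq_iff split: if_splits)
    qed
    have "mat_congruent M' M"
    proof (cases "M = mat2 0 (2 ^ d) 0")
      case True
      then have "2 dvd x" using xez(5)[OF 2] by simp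
      then show ?thesis unfolding M'eq xez(2-4) True using final2_H[OF xez(1)] by blast
    next
      case False
      then have MA: "M = mat2 (2 ^ (d + 1)) (2 ^ d) (2 ^ (d + 1))" using M by blast
      have "\<not> 2 dvd x" "\<not> 2 dvd z" using xez(5)[OF 2] False by auto
      then show ?thesis unfolding M'eq xez(2-4) MA using final2_A[OF xez(1)] by blast
    qed
    then show ?thesis using notT by simp
  qed
qed

theorem mainTheorem3:
  shows "(prime CARD('p::card2) \<and> odd CARD('p) \<longrightarrow>
           (\<forall>\<alpha> \<alpha>' :: 'p padic_int.
              \<alpha> \<noteq> 0 \<and> \<alpha>' \<noteq> 0 \<and> of_nat CARD('p) dvd \<alpha> \<and> of_nat CARD('p) dvd \<alpha>' \<and>
              inv_diff_integral \<alpha> \<alpha>' \<longrightarrow>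
              (\<exists>u. u dvd 1 \<and> \<alpha>' = \<alpha> * u ^ 2)))
       \<and> (\<forall>(d::nat) (M :: 2 padic_int mat) M'.
              d \<ge> 1 \<and> M \<in> M_list d \<and>
              M' \<in> carrier_mat (dim_row M) (dim_row M) \<and> symmetric_mat M' \<and> det M' \<noteq> 0 \<and>
              mat_inv_diff_integral M M' \<longrightarrow>
              (if (\<exists>i \<in> {1..4::nat}. M \<in> T_set i)
               then (\<forall>i \<in> {1..4::nat}. M \<in> T_set i \<longrightarrow> (\<exists>N \<in> T_set i. mat_congruent M' N))
               else mat_congruent M' M))"
proof (intro conjI)
  show "prime CARD('p::card2) \<and> odd CARD('p) \<longrightarrow>
           (\<forall>\<alpha> \<alpha>' :: 'p padic_int.
              \<alpha> \<noteq> 0 \<and> \<alpha>' \<noteq> 0 \<and> of_nat CARD('p) dvd \<alpha> \<and> of_nat CARD('p) dvd \<alpha>' \<and>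
              inv_diff_integral \<alpha> \<alpha>' \<longrightarrow>
              (\<exists>u. u dvd 1 \<and> \<alpha>' = \<alpha> * u ^ 2))"
    using part1 by blast
next
  show "\<forall>(d::nat) (M :: 2 padic_int mat) M'.
              d \<ge> 1 \<and> M \<in> M_list d \<and>
              M' \<in> carrier_mat (dim_row M) (dim_row M) \<and> symmetric_mat M' \<and> det M' \<noteq> 0 \<and>
              mat_inv_diff_integral M M' \<longrightarrow>
              (if (\<exists>i \<in> {1..4::nat}. M \<in> T_set i)
               then (\<forall>i \<in> {1..4::nat}. M \<in> T_set i \<longrightarrow> (\<exists>N \<in> T_set i. mat_congruent M' N))
               else mat_congruent M' M)"
  proof (intro allI impI)
    fix d :: nat and M M' :: "2 padic_int mat"
    assume H: "d \<ge> 1 \<and> M \<in> M_list d \<and>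
              M' \<in> carrier_mat (dim_row M) (dim_row M) \<and> symmetric_mat M' \<and> det M' \<noteq> 0 \<and>
              mat_inv_diff_integral M M'"
    then have d: "d \<ge> 1" and Mlist: "M \<in> M_list d" and car: "M' \<in> carrier_mat (dim_row M) (dim_row M)"
      and sym: "symmetric_mat M'" and det: "det M' \<noteq> 0" and cond: "mat_inv_diff_integral M M'" by auto
    have "(\<exists>kk. kk \<in> {1,3,5,7::int} \<and> M = mat1 (2 ^ d * of_int kk)) \<or>
          M = mat2 0 (2 ^ d) 0 \<or> M = mat2 (2 ^ (d + 1)) (2 ^ d) (2 ^ (d + 1))"
    proof -
      have "M = mat1 (2 ^ d * of_int 1) \<or> M = mat1 (2 ^ d * of_int 3) \<or> M = mat1 (2 ^ d * of_int 5) \<or>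
            M = mat1 (2 ^ d * of_int 7) \<or> M = mat2 0 (2 ^ d) 0 \<or> M = mat2 (2 ^ (d + 1)) (2 ^ d) (2 ^ (d + 1))"
        using Mlist unfolding M_list_def by (auto simp: mult.commute)
      then show ?thesis by blast
    qed
    then show "if (\<exists>i \<in> {1..4::nat}. M \<in> T_set i)
               then (\<forall>i \<in> {1..4::nat}. M \<in> T_set i \<longrightarrow> (\<exists>N \<in> T_set i. mat_congruent M' N))
               else mat_congruent M' M"
    proof (elim disjE exE conjE)
      fix kk assume kk: "kk \<in> {1,3,5,7::int}" and M1: "M = mat1 (2 ^ d * of_int kk)"
      have "M' \<in> carrier_mat 1 1" using car M1 by simp
      then show ?thesis using main1[OF d kk M1 _ det cond] by blast
    next
      assume M2: "M = mat2 0 (2 ^ d) 0"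
      have "M' \<in> carrier_mat 2 2" using car M2 by simp
      then show ?thesis using main2[OF d _ _ sym det cond] M2 by blast
    next
      assume M2: "M = mat2 (2 ^ (d + 1)) (2 ^ d) (2 ^ (d + 1))"
      have "M' \<in> carrier_mat 2 2" using car M2 by simp
      then show ?thesis using main2[OF d _ _ sym det cond] M2 by blast
    qed
  qed
qed

end
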